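(* Let $K$ be a field of characteristic zero and $V$ a $K$-vector space of finite or countably infinite dimension. Let $m$ be a commutative product on $T(V)$ such that $(T(V),m,\eta,\Delta,\varepsilon)$ is a bialgebra (hence a Hopf algebra, with antipode $S$). Then $(T(V),m,\eta,\Delta,\varepsilon,S)$ and $(T(V),*,1,\Delta,\varepsilon,S_* )$ are isomorphic Hopf algebras.
   Context: $T(V)=\bigoplus_{n\ge0}V^{\otimes n}$, with $v_1\top\cdots\top v_n$ denoting $v_1\otimes\cdots\otimes v_n$ and $1$ the generator of $V^{\otimes0}=K$, is the tensor coalgebra: $\Delta(v_1\top\cdots\top v_n)=\sum_{k=0}^n(v_1\top\cdots\top v_k)\otimes(v_{k+1}\top\cdots\top v_n)$, $\varepsilon(1)=1$, $\varepsilon(V^{\otimes n})=0$ for $n\ge1$. The shuffle product $*$ is defined by $(v_1\top\cdots\top v_p)*(v_{p+1}\top\cdots\top v_{p+q})=\sum w$, the sum running over all words $w=v_{i_1}\top\cdots\top v_{i_{p+q}}$ obtained by interleaving $v_1,\dots,v_p$ and $v_{p+1},\dots,v_{p+q}$ while preserving the relative order within each of the two words (there are $\binom{p+q}{p}$ terms), with unit $1$. $(T(V),*,1,\Delta,\varepsilon)$ is a commutative Hopf algebra with antipode $S_*(v_1\top\cdots\top v_n)=(-1)^nv_n\top\cdots\top v_1$. *)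

theory Defs
  imports "HOL-Library.Poly_Mapping" "HOL-Library.Countable_Set"
begin

text \<open>
  Model: the K-vector space V has a basis indexed by a countable set I (any vector
  space of finite or countably infinite dimension is of this form up to isomorphism).
  Then T(V) is the free K-module on the words over I, i.e. finitely supported
  functions from words (lists) to K; a word  i1 ... in  stands for the
  tensor  e_i1 T ... T e_in, and the empty word for the unit 1 of V^0 = K.
  T(V) (x) T(V) is the free K-module on pairs of words.
\<close>

type_synonym ('i, 'k) tens = "'i list \<Rightarrow>\<^sub>0 'k"
type_synonym ('i, 'k) tens2 = "('i list \<times> 'i list) \<Rightarrow>\<^sub>0 'k"

definition TV :: "'i set \<Rightarrow> ('i, 'k::field) tens set" where
  "TV I = {x. Poly_Mapping.keys x \<subseteq> lists I}"

definition smult :: "'k::field \<Rightarrow> ('a \<Rightarrow>\<^sub>0 'k) \<Rightarrow> ('a \<Rightarrow>\<^sub>0 'k)" where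
  "smult c x = Poly_Mapping.map (\<lambda>a. c * a) x"

definition word :: "'i list \<Rightarrow> ('i, 'k::field) tens" where
  "word w = Poly_Mapping.single w 1"

definition lin_on :: "'i set \<Rightarrow> (('i, 'k::field) tens \<Rightarrow> ('i, 'k) tens) \<Rightarrow> bool" where
  "lin_on I f \<longleftrightarrow> (\<forall>x\<in>TV I. f x \<in> TV I) \<and>
     (\<forall>x\<in>TV I. \<forall>y\<in>TV I. f (x + y) = f x + f y) \<and>
     (\<forall>c. \<forall>x\<in>TV I. f (smult c x) = smult c (f x))"

definition bilin_on :: "'i set \<Rightarrow> (('i, 'k::field) tens \<Rightarrow> ('i, 'k) tens \<Rightarrow> ('i, 'k) tens) \<Rightarrow> bool" where
  "bilin_on I m \<longleftrightarrow> (\<forall>x\<in>TV I. \<forall>y\<in>TV I. m x y \<in> TV I) \<and>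
     (\<forall>x\<in>TV I. \<forall>y\<in>TV I. \<forall>z\<in>TV I. m (x + y) z = m x z + m y z) \<and>
     (\<forall>x\<in>TV I. \<forall>y\<in>TV I. \<forall>z\<in>TV I. m x (y + z) = m x y + m x z) \<and>
     (\<forall>c. \<forall>x\<in>TV I. \<forall>y\<in>TV I. m (smult c x) y = smult c (m x y)) \<and>
     (\<forall>c. \<forall>x\<in>TV I. \<forall>y\<in>TV I. m x (smult c y) = smult c (m x y))"

definition tensor :: "('i, 'k::field) tens \<Rightarrow> ('i, 'k) tens \<Rightarrow> ('i, 'k) tens2" where
  "tensor x y = (\<Sum>p\<in>Poly_Mapping.keys x. \<Sum>q\<in>Poly_Mapping.keys y.
      Poly_Mapping.single (p, q) (Poly_Mapping.lookup x p * Poly_Mapping.lookup y q))"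

definition Delta :: "('i, 'k::field) tens \<Rightarrow> ('i, 'k) tens2" where
  "Delta x = (\<Sum>w\<in>Poly_Mapping.keys x. \<Sum>k\<le>length w.
      Poly_Mapping.single (take k w, drop k w) (Poly_Mapping.lookup x w))"

definition eps :: "('i, 'k::field) tens \<Rightarrow> 'k" where
  "eps x = Poly_Mapping.lookup x []"

definition tmap :: "(('i, 'k::field) tens \<Rightarrow> ('i, 'k) tens) \<Rightarrow> (('i, 'k) tens \<Rightarrow> ('i, 'k) tens)
    \<Rightarrow> ('i, 'k) tens2 \<Rightarrow> ('i, 'k) tens2" where
  "tmap f g X = (\<Sum>(p, q)\<in>Poly_Mapping.keys X.
      smult (Poly_Mapping.lookup X (p, q)) (tensor (f (word p)) (g (word q))))"

definition mult_ext :: "(('i, 'k::field) tens \<Rightarrow> ('i, 'k) tens \<Rightarrow> ('i, 'k) tens)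
    \<Rightarrow> ('i, 'k) tens2 \<Rightarrow> ('i, 'k) tens" where
  "mult_ext m X = (\<Sum>(p, q)\<in>Poly_Mapping.keys X.
      smult (Poly_Mapping.lookup X (p, q)) (m (word p) (word q)))"

definition mult2 :: "(('i, 'k::field) tens \<Rightarrow> ('i, 'k) tens \<Rightarrow> ('i, 'k) tens)
    \<Rightarrow> ('i, 'k) tens2 \<Rightarrow> ('i, 'k) tens2 \<Rightarrow> ('i, 'k) tens2" where
  "mult2 m X Y = (\<Sum>(p, q)\<in>Poly_Mapping.keys X. \<Sum>(r, s)\<in>Poly_Mapping.keys Y.
      smult (Poly_Mapping.lookup X (p, q) * Poly_Mapping.lookup Y (r, s))
        (tensor (m (word p) (word r)) (m (word q) (word s))))"

text \<open>All interleavings of two words, listed with multiplicity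
  (binomial(p+q,p) entries).\<close>
fun shuffle_list :: "'a list \<Rightarrow> 'a list \<Rightarrow> 'a list list" where
  "shuffle_list [] ys = [ys]"
| "shuffle_list xs [] = [xs]"
| "shuffle_list (x # xs) (y # ys) =
     map (\<lambda>w. x # w) (shuffle_list xs (y # ys)) @ map (\<lambda>w. y # w) (shuffle_list (x # xs) ys)"

definition shuffle_word :: "'i list \<Rightarrow> 'i list \<Rightarrow> ('i, 'k::field) tens" where
  "shuffle_word xs ys = (\<Sum>w\<leftarrow>shuffle_list xs ys. word w)"

definition shuffle :: "('i, 'k::field) tens \<Rightarrow> ('i, 'k) tens \<Rightarrow> ('i, 'k) tens" where
  "shuffle x y = (\<Sum>p\<in>Poly_Mapping.keys x. \<Sum>q\<in>Poly_Mapping.keys y.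
      smult (Poly_Mapping.lookup x p * Poly_Mapping.lookup y q) (shuffle_word p q))"

definition shuffle_antipode :: "('i, 'k::field) tens \<Rightarrow> ('i, 'k) tens" where
  "shuffle_antipode x = (\<Sum>w\<in>Poly_Mapping.keys x.
      smult ((-1) ^ length w * Poly_Mapping.lookup x w) (word (rev w)))"

end

theory Submission
  imports Defs "HOL-Computational_Algebra.Polynomial"
begin


hide_const (open) Polynomial.smult

abbreviation lk where "lk \<equiv> Poly_Mapping.lookup"
abbreviation keys where "keys \<equiv> Poly_Mapping.keys"

lemma lookup_smult [simp]: "lk (smult c x) a = c * lk x a"
  by (simp add: Defs.smult_def Poly_Mapping.map.rep_eq Poly_Mapping.when_def)

lemma lookup_word: "lk (word w) v = (if w = v then 1 else 0)"
  by (simp add: word_def lookup_single Poly_Mapping.when_def)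

lemma keys_smult: "keys (smult c x) \<subseteq> keys x"
  by (auto simp: in_keys_iff)

definition sc :: "('a \<Rightarrow> 'k::field) \<Rightarrow> ('a \<Rightarrow>\<^sub>0 'k) \<Rightarrow> 'k" where
  "sc g x = (\<Sum>a\<in>keys x. lk x a * g a)"

definition ext :: "('a \<Rightarrow> ('b \<Rightarrow>\<^sub>0 'k::field)) \<Rightarrow> ('a \<Rightarrow>\<^sub>0 'k) \<Rightarrow> ('b \<Rightarrow>\<^sub>0 'k)" where
  "ext g x = (\<Sum>a\<in>keys x. smult (lk x a) (g a))"

lemma sc_superset: "finite A \<Longrightarrow> keys x \<subseteq> A \<Longrightarrow> sc g x = (\<Sum>a\<in>A. lk x a * g a)"
  unfolding sc_def by (rule sum.mono_neutral_left) (auto simp: in_keys_iff)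

lemma lookup_ext: "lk (ext g x) b = sc (\<lambda>a. lk (g a) b) x"
  by (simp add: ext_def sc_def lookup_sum)

lemma sc_add: "sc g (x + y) = sc g x + sc g y"
proof -
  have f: "finite (keys x \<union> keys y)" by simp
  have k: "keys (x + y) \<subseteq> keys x \<union> keys y" by (rule keys_add)
  show ?thesis
    by (simp add: sc_superset[OF f k] sc_superset[OF f, of x] sc_superset[OF f, of y]
          lookup_add distrib_right sum.distrib)
qed

lemma sc_smult: "sc g (smult c x) = c * sc g x"
proof -
  have "sc g (smult c x) = (\<Sum>a\<in>keys x. lk (smult c x) a * g a)"
    by (rule sc_superset[OF finite_keys keys_smult])
  then show ?thesis by (simp add: sc_def sum_distrib_left mult.assoc)
qed

lemma sc_zero [simp]: "sc g 0 = 0"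
  by (simp add: sc_def)

lemma sc_single: "sc g (Poly_Mapping.single a c) = c * g a"
  by (simp add: sc_superset[of "{a}"] lookup_single)

lemma sc_word: "sc g (word w) = g w"
  by (simp add: word_def sc_single)

lemma sc_sum: "sc g (\<Sum>i\<in>A. X i) = (\<Sum>i\<in>A. sc g (X i))"
  by (induction A rule: infinite_finite_induct) (auto simp: sc_add)

lemma sc_uminus: "sc g (- x) = - sc g x"
  by (simp add: sc_def sum_negf)

lemma sc_diff: "sc g (x - y) = sc g x - sc g y"
  using sc_add[of g x "-y"] by (simp add: sc_uminus)

lemma sc_fun_add: "sc (\<lambda>a. g a + h a) x = sc g x + sc h x"
  by (simp add: sc_def distrib_left sum.distrib)

lemma sc_fun_cmult: "sc (\<lambda>a. c * g a) x = c * sc g x"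
  unfolding sc_def sum_distrib_left by (rule sum.cong) (auto simp: algebra_simps)

lemma sc_fun_multc: "sc (\<lambda>a. g a * c) x = sc g x * c"
  unfolding sc_def sum_distrib_right by (rule sum.cong) (auto simp: algebra_simps)

lemma sc_fun_sum: "sc (\<lambda>a. \<Sum>i\<in>A. g i a) x = (\<Sum>i\<in>A. sc (g i) x)"
  unfolding sc_def sum_distrib_left by (rule sum.swap)

lemma sc_cong: "(\<And>a. a \<in> keys x \<Longrightarrow> g a = h a) \<Longrightarrow> sc g x = sc h x"
  by (simp add: sc_def)

lemma sc_indicator: "sc (\<lambda>a. if a = b then c else 0) x = lk x b * c"
proof -
  have "(\<lambda>a. lk x a * (if a = b then c else 0)) = (\<lambda>a. if a = b then lk x b * c else 0)"
    by auto
  then show ?thesis by (simp only: sc_def) (simp add: sum.delta in_keys_iff)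
qed

lemma sc_indicator': "sc (\<lambda>a. if b = a then c else 0) x = lk x b * c"
  using sc_indicator[of b c x] by (simp add: eq_commute)

lemma sc_zero_fun [simp]: "sc (\<lambda>a. 0) x = 0"
  by (simp add: sc_def)

lemma keys_ext: "keys (ext g x) \<subseteq> (\<Union>a\<in>keys x. keys (g a))"
proof
  fix b assume "b \<in> keys (ext g x)"
  then have "sc (\<lambda>a. lk (g a) b) x \<noteq> 0" by (simp add: in_keys_iff lookup_ext)
  then obtain a where "a \<in> keys x" "lk x a * lk (g a) b \<noteq> 0"
    unfolding sc_def by (rule sum.not_neutral_contains_not_neutral)
  then show "b \<in> (\<Union>a\<in>keys x. keys (g a))" by (auto simp: in_keys_iff)
qed

lemma sc_ext: "sc g (ext h x) = sc (\<lambda>a. sc g (h a)) x"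
proof -
  define B where "B = (\<Union>a\<in>keys x. keys (h a))"
  have fB: "finite B" by (simp add: B_def)
  have "sc g (ext h x) = (\<Sum>b\<in>B. lk (ext h x) b * g b)"
    by (rule sc_superset[OF fB]) (unfold B_def, rule keys_ext)
  also have "\<dots> = (\<Sum>b\<in>B. (\<Sum>a\<in>keys x. lk x a * lk (h a) b) * g b)"
    by (simp add: lookup_ext sc_def)
  also have "\<dots> = (\<Sum>b\<in>B. (\<Sum>a\<in>keys x. lk x a * (lk (h a) b * g b)))"
    by (simp add: sum_distrib_right mult.assoc)
  also have "\<dots> = (\<Sum>a\<in>keys x. (\<Sum>b\<in>B. lk x a * (lk (h a) b * g b)))"
    by (rule sum.swap)
  also have "\<dots> = (\<Sum>a\<in>keys x. lk x a * (\<Sum>b\<in>B. lk (h a) b * g b))"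
    by (simp add: sum_distrib_left)
  also have "\<dots> = (\<Sum>a\<in>keys x. lk x a * sc g (h a))"
    by (rule sum.cong[OF refl]) (subst sc_superset[OF fB], auto simp: B_def)
  finally show ?thesis by (simp add: sc_def)
qed

lemma ext_eqI: "(\<And>b. lk X b = lk Y b) \<Longrightarrow> X = Y"
  by (rule poly_mapping_eqI)

lemma ext_add: "ext g (x + y) = ext g x + ext g y"
  by (rule poly_mapping_eqI) (simp add: lookup_ext lookup_add sc_add)

lemma ext_smult: "ext g (smult c x) = smult c (ext g x)"
  by (rule poly_mapping_eqI) (simp add: lookup_ext sc_smult)

lemma ext_zero [simp]: "ext g 0 = 0"
  by (simp add: ext_def)

lemma ext_single: "ext g (Poly_Mapping.single a c) = smult c (g a)"
  by (rule poly_mapping_eqI) (simp add: lookup_ext sc_single)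

lemma ext_word: "ext g (word w) = g w"
  by (rule poly_mapping_eqI) (simp add: lookup_ext sc_word)

lemma ext_sum: "ext g (\<Sum>i\<in>A. X i) = (\<Sum>i\<in>A. ext g (X i))"
  by (rule poly_mapping_eqI) (simp add: lookup_ext lookup_sum sc_sum)

lemma ext_diff: "ext g (x - y) = ext g x - ext g y"
  by (rule poly_mapping_eqI) (simp add: lookup_ext lookup_minus sc_diff)

lemma ext_fun_add: "ext (\<lambda>a. g a + h a) x = ext g x + ext h x"
  by (rule poly_mapping_eqI) (simp add: lookup_ext lookup_add sc_fun_add)

lemma ext_fun_smult: "ext (\<lambda>a. smult c (g a)) x = smult c (ext g x)"
  by (rule poly_mapping_eqI) (simp add: lookup_ext sc_fun_cmult)

lemma ext_fun_sum: "ext (\<lambda>a. \<Sum>i\<in>A. g i a) x = (\<Sum>i\<in>A. ext (g i) x)"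
  by (rule poly_mapping_eqI) (simp add: lookup_ext lookup_sum sc_fun_sum)

lemma ext_fun_zero [simp]: "ext (\<lambda>a. 0) x = 0"
  by (rule poly_mapping_eqI) (simp add: lookup_ext)

lemma ext_cong: "(\<And>a. a \<in> keys x \<Longrightarrow> g a = h a) \<Longrightarrow> ext g x = ext h x"
  by (simp add: ext_def)

lemma ext_ext: "ext g (ext h x) = ext (\<lambda>a. ext g (h a)) x"
  by (rule poly_mapping_eqI) (simp add: lookup_ext sc_ext)

lemma ext_id: "ext word x = x"
  by (rule poly_mapping_eqI) (simp add: lookup_ext lookup_word sc_indicator)

lemma ext_swap: "ext (\<lambda>p. ext (\<lambda>q. H p q) y) x = ext (\<lambda>q. ext (\<lambda>p. H p q) x) y"
proof (rule poly_mapping_eqI)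
  fix b
  have "(\<Sum>p\<in>keys x. lk x p * (\<Sum>q\<in>keys y. lk y q * lk (H p q) b))
      = (\<Sum>p\<in>keys x. \<Sum>q\<in>keys y. lk y q * (lk x p * lk (H p q) b))"
    by (simp add: sum_distrib_left mult.left_commute)
  also have "\<dots> = (\<Sum>q\<in>keys y. \<Sum>p\<in>keys x. lk y q * (lk x p * lk (H p q) b))"
    by (rule sum.swap)
  also have "\<dots> = (\<Sum>q\<in>keys y. lk y q * (\<Sum>p\<in>keys x. lk x p * lk (H p q) b))"
    by (simp add: sum_distrib_left)
  finally show "lk (ext (\<lambda>p. ext (\<lambda>q. H p q) y) x) b = lk (ext (\<lambda>q. ext (\<lambda>p. H p q) x) y) b"
    by (simp add: lookup_ext sc_def)
qed

lemma smult_add: "smult c (x + y) = smult c x + smult c y"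
  by (rule poly_mapping_eqI) (simp add: lookup_add algebra_simps)

lemma smult_sum: "smult c (\<Sum>i\<in>A. X i) = (\<Sum>i\<in>A. smult c (X i))"
  by (rule poly_mapping_eqI) (simp add: lookup_sum sum_distrib_left)

lemma smult_smult: "smult a (smult b x) = smult (a * b) x"
  by (rule poly_mapping_eqI) simp

lemma smult_one [simp]: "smult 1 x = x"
  by (rule poly_mapping_eqI) simp

lemma smult_zero [simp]: "smult 0 x = 0"
  by (rule poly_mapping_eqI) simp

lemma smult_zero2 [simp]: "smult c 0 = 0"
  by (rule poly_mapping_eqI) simp

lemma smult_single: "smult c (Poly_Mapping.single a d) = Poly_Mapping.single a (c * d)"
  by (rule poly_mapping_eqI) (simp add: lookup_single Poly_Mapping.when_def)

lemma smult_add_left: "smult (a + b) x = smult a x + smult b x"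
  by (rule poly_mapping_eqI) (simp add: lookup_add algebra_simps)

lemma smult_sum_left: "smult (\<Sum>i\<in>A. c i) x = (\<Sum>i\<in>A. smult (c i) x)"
  by (rule poly_mapping_eqI) (simp add: lookup_sum sum_distrib_right)

lemma TV_iff: "x \<in> TV I \<longleftrightarrow> keys x \<subseteq> lists I"
  by (simp add: TV_def)

lemma TV_zero [simp]: "0 \<in> TV I"
  by (simp add: TV_def)

lemma TV_add: "x \<in> TV I \<Longrightarrow> y \<in> TV I \<Longrightarrow> x + y \<in> TV I"
  unfolding TV_def using keys_add[of x y] by (simp add: subset_iff) blast

lemma TV_smult: "x \<in> TV I \<Longrightarrow> smult c x \<in> TV I"
  unfolding TV_def using keys_smult[of c x] by (simp add: subset_iff)

lemma TV_sum: "(\<And>i. i \<in> A \<Longrightarrow> X i \<in> TV I) \<Longrightarrow> (\<Sum>i\<in>A. X i) \<in> TV I"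
  by (induction A rule: infinite_finite_induct) (auto intro: TV_add)

lemma TV_word: "w \<in> lists I \<Longrightarrow> word w \<in> TV I"
  by (simp add: TV_def word_def)

lemma TV_ext: "(\<And>a. a \<in> keys x \<Longrightarrow> g a \<in> TV I) \<Longrightarrow> ext g x \<in> TV I"
  unfolding ext_def by (intro TV_sum TV_smult) auto

lemma TV_uminus: "x \<in> TV I \<Longrightarrow> - x \<in> TV I"
  by (simp add: TV_def keys_minus)

lemma TV_diff: "x \<in> TV I \<Longrightarrow> y \<in> TV I \<Longrightarrow> x - y \<in> TV I"
  unfolding diff_conv_add_uminus by (rule TV_add[OF _ TV_uminus])

lemma TV_keys: "x \<in> TV I \<Longrightarrow> w \<in> keys x \<Longrightarrow> w \<in> lists I"
  by (auto simp: TV_def)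

lemma lin_add: "lin_on I F \<Longrightarrow> x \<in> TV I \<Longrightarrow> y \<in> TV I \<Longrightarrow> F (x + y) = F x + F y"
  by (simp add: lin_on_def)

lemma lin_smult: "lin_on I F \<Longrightarrow> x \<in> TV I \<Longrightarrow> F (smult c x) = smult c (F x)"
  by (simp add: lin_on_def)

lemma lin_TV: "lin_on I F \<Longrightarrow> x \<in> TV I \<Longrightarrow> F x \<in> TV I"
  by (simp add: lin_on_def)

lemma lin_zero: "lin_on I F \<Longrightarrow> F 0 = 0"
  using lin_smult[of I F 0 0] by simp

lemma lin_sum: "lin_on I F \<Longrightarrow> (\<And>i. i \<in> A \<Longrightarrow> X i \<in> TV I) \<Longrightarrow> F (\<Sum>i\<in>A. X i) = (\<Sum>i\<in>A. F (X i))"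
proof (induction A rule: infinite_finite_induct)
  case (insert a A)
  then show ?case by (simp add: lin_add TV_sum)
qed (auto simp: lin_zero)

lemma lin_ext: "lin_on I F \<Longrightarrow> (\<And>a. a \<in> keys x \<Longrightarrow> g a \<in> TV I) \<Longrightarrow> F (ext g x) = ext (\<lambda>a. F (g a)) x"
  unfolding ext_def by (subst lin_sum) (auto intro: TV_smult simp: lin_smult)

lemma lin_repr: "lin_on I F \<Longrightarrow> x \<in> TV I \<Longrightarrow> F x = ext (\<lambda>w. F (word w)) x"
  using lin_ext[of I F x word] by (simp add: ext_id TV_word TV_keys)

lemma lin_ext_on: "(\<And>w. w \<in> lists I \<Longrightarrow> g w \<in> TV I) \<Longrightarrow> lin_on I (ext g)"
  unfolding lin_on_def by (auto intro!: TV_ext simp: ext_add ext_smult TV_keys)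

lemma lin_diff: "lin_on I F \<Longrightarrow> x \<in> TV I \<Longrightarrow> y \<in> TV I \<Longrightarrow> F (x - y) = F x - F y"
proof -
  assume F: "lin_on I F" and x: "x \<in> TV I" and y: "y \<in> TV I"
  have "F x = F ((x - y) + y)" by simp
  also have "\<dots> = F (x - y) + F y" by (rule lin_add[OF F TV_diff[OF x y] y])
  finally show ?thesis by simp
qed


lemma tens2_eqI: "(\<And>p q. lk X (p, q) = lk Y (p, q)) \<Longrightarrow> X = Y"
  by (rule poly_mapping_eqI) auto

lemma tensor_ext: "tensor x y = ext (\<lambda>p. ext (\<lambda>q. Poly_Mapping.single (p, q) 1) y) x"
  unfolding tensor_def ext_def by (simp add: smult_sum smult_single)

lemma lookup_single_pair: "lk (Poly_Mapping.single (p', q') c) (p, q) = (if p' = p then (if q' = q then c else 0) else 0)"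
  by (simp add: lookup_single Poly_Mapping.when_def)

lemma lookup_tensor: "lk (tensor x y) (p, q) = lk x p * lk y q"
proof -
  have "lk (tensor x y) (p, q) = sc (\<lambda>p'. sc (\<lambda>q'. if p' = p then (if q' = q then 1 else 0) else 0) y) x"
    by (simp add: tensor_ext lookup_ext lookup_single_pair)
  also have "\<dots> = sc (\<lambda>p'. if p' = p then lk y q else 0) x"
    by (rule sc_cong) (simp add: sc_indicator)
  also have "\<dots> = lk x p * lk y q" by (simp add: sc_indicator)
  finally show ?thesis .
qed

definition Dw :: "'i list \<Rightarrow> ('i, 'k::field) tens2" where
  "Dw w = (\<Sum>k\<le>length w. Poly_Mapping.single (take k w, drop k w) 1)"

lemma Delta_ext: "Delta x = ext Dw x"
  unfolding Delta_def ext_def Dw_def by (simp add: smult_sum smult_single)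

lemma Delta_word: "Delta (word w) = Dw w"
  by (simp add: Delta_ext ext_word)

lemma take_drop_eq_iff: "k \<le> length w \<Longrightarrow> ((take k w, drop k w) = (x, y)) = (k = length x \<and> w = x @ y)"
proof
  assume k: "k \<le> length w" and e: "(take k w, drop k w) = (x, y)"
  then have t: "take k w = x" and d: "drop k w = y" by auto
  have "w = x @ y" using t d append_take_drop_id[of k w] by simp
  moreover have "length x = k" using t k by auto
  ultimately show "k = length x \<and> w = x @ y" by simp
next
  assume "k = length x \<and> w = x @ y"
  then show "(take k w, drop k w) = (x, y)" by simp
qed

lemma lookup_single_if: "lk (Poly_Mapping.single k c) k' = (if k = k' then c else 0)"
  by (simp add: lookup_single Poly_Mapping.when_def)

lemma lookup_Dw: "lk (Dw w :: ('i, 'k::field) tens2) (x, y) = (if w = x @ y then 1 else 0)"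
proof -
  have "lk (Dw w :: ('i, 'k) tens2) (x, y) = (\<Sum>k\<le>length w. if k = length x then (if w = x @ y then 1 else 0) else 0)"
    unfolding Dw_def lookup_sum
  proof (rule sum.cong[OF refl])
    fix k assume k: "k \<in> {..length w}"
    show "lk (Poly_Mapping.single (take k w, drop k w) (1::'k)) (x, y) =
          (if k = length x then (if w = x @ y then 1 else 0) else 0)"
    proof -
      have eq: "((take k w, drop k w) = (x, y)) = (k = length x \<and> w = x @ y)"
        using k by (intro take_drop_eq_iff) simp
      show ?thesis by (simp only: lookup_single_if eq) auto
    qed
  qed
  also have "\<dots> = (if w = x @ y then 1 else 0)"
    by (auto simp: sum.delta)
  finally show ?thesis .
qed

lemma lookup_Delta: "lk (Delta X) (x, y) = lk X (x @ y)"
  by (simp add: Delta_ext lookup_ext lookup_Dw sc_indicator)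

lemma tmap_ext: "tmap f g X = ext (\<lambda>(p, q). tensor (f (word p)) (g (word q))) X"
  unfolding tmap_def ext_def by (rule sum.cong) auto

lemma mult_ext_ext: "mult_ext m X = ext (\<lambda>(p, q). m (word p) (word q)) X"
  unfolding mult_ext_def ext_def by (rule sum.cong) auto

lemma mult2_ext: "mult2 m X Y = ext (\<lambda>(p, q). ext (\<lambda>(r, s). tensor (m (word p) (word r)) (m (word q) (word s))) Y) X"
  unfolding mult2_def ext_def by (rule sum.cong) (auto simp: smult_sum smult_smult split_beta)

lemma shuffle_ext: "shuffle x y = ext (\<lambda>p. ext (\<lambda>q. shuffle_word p q) y) x"
  unfolding shuffle_def ext_def by (simp add: smult_sum smult_smult)

lemma shuffle_antipode_ext: "shuffle_antipode x = ext (\<lambda>w. smult ((-1) ^ length w) (word (rev w))) x"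
  unfolding shuffle_antipode_def ext_def by (simp add: smult_smult mult.commute)

lemma ext_tensor: "ext G (tensor P Q) = ext (\<lambda>p. ext (\<lambda>q. G (p, q)) Q) P"
  by (simp add: tensor_ext ext_ext ext_single)

lemma tensor_ext_left: "tensor (ext g x) y = ext (\<lambda>a. tensor (g a) y) x"
  by (rule tens2_eqI) (simp add: lookup_tensor lookup_ext sc_fun_multc)

lemma tensor_ext_right: "tensor x (ext g y) = ext (\<lambda>a. tensor x (g a)) y"
  by (rule tens2_eqI) (simp add: lookup_tensor lookup_ext sc_fun_cmult)

lemma tmap_tensor:
  assumes F: "lin_on I F" and G: "lin_on I G" and P: "P \<in> TV I" and Q: "Q \<in> TV I"
  shows "tmap F G (tensor P Q) = tensor (F P) (G Q)"
proof -
  have "tmap F G (tensor P Q) = ext (\<lambda>p. ext (\<lambda>q. tensor (F (word p)) (G (word q))) Q) P"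
    by (simp add: tmap_ext ext_tensor)
  also have "\<dots> = tensor (ext (\<lambda>p. F (word p)) P) (ext (\<lambda>q. G (word q)) Q)"
    by (subst tensor_ext_left, subst tensor_ext_right, rule refl)
  also have "\<dots> = tensor (F P) (G Q)"
    using lin_repr[OF F P] lin_repr[OF G Q] by simp
  finally show ?thesis .
qed

lemma bilin_lin1: "bilin_on I m \<Longrightarrow> y \<in> TV I \<Longrightarrow> lin_on I (\<lambda>x. m x y)"
  by (simp add: bilin_on_def lin_on_def)

lemma bilin_lin2: "bilin_on I m \<Longrightarrow> x \<in> TV I \<Longrightarrow> lin_on I (m x)"
  by (simp add: bilin_on_def lin_on_def)

lemma bilin_TV: "bilin_on I m \<Longrightarrow> x \<in> TV I \<Longrightarrow> y \<in> TV I \<Longrightarrow> m x y \<in> TV I"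
  by (simp add: bilin_on_def)

lemma bilin_repr:
  assumes m: "bilin_on I m" and x: "x \<in> TV I" and y: "y \<in> TV I"
  shows "m x y = ext (\<lambda>p. ext (\<lambda>q. m (word p) (word q)) y) x"
proof -
  have "m x y = ext (\<lambda>p. m (word p) y) x"
    by (rule lin_repr[OF bilin_lin1[OF m y] x])
  also have "\<dots> = ext (\<lambda>p. ext (\<lambda>q. m (word p) (word q)) y) x"
    by (rule ext_cong) (rule lin_repr[OF bilin_lin2[OF m] y], simp add: TV_word TV_keys[OF x])
  finally show ?thesis .
qed

lemma mult_ext_tensor:
  assumes m: "bilin_on I m" and P: "P \<in> TV I" and Q: "Q \<in> TV I"
  shows "mult_ext m (tensor P Q) = m P Q"
  by (simp add: mult_ext_ext ext_tensor bilin_repr[OF m P Q])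

definition pre :: "'i \<Rightarrow> ('i, 'k::field) tens \<Rightarrow> ('i, 'k) tens" where
  "pre c X = ext (\<lambda>w. word (c # w)) X"

lemma lookup_pre_nil [simp]: "lk (pre c X) [] = 0"
  by (simp add: pre_def lookup_ext lookup_word)

lemma lookup_pre_cons: "lk (pre c X) (l # v) = (if c = l then lk X v else 0)"
proof -
  have "lk (pre c X) (l # v) = sc (\<lambda>w. if c = l then (if w = v then 1 else 0) else 0) X"
    unfolding pre_def lookup_ext by (rule sc_cong) (auto simp: lookup_word)
  then show ?thesis by (cases "c = l") (simp_all add: sc_indicator)
qed

lemma sum_list_map_word_cons: "(\<Sum>w\<leftarrow>L. word (c # w)) = pre c (\<Sum>w\<leftarrow>L. word w)"
  by (induction L) (simp_all add: pre_def ext_add ext_word)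

lemma sw_nil_left [simp]: "shuffle_word [] q = word q"
  by (simp add: shuffle_word_def)

lemma shuffle_list_nil_right [simp]: "shuffle_list p [] = [p]"
  by (cases p) simp_all

lemma sw_nil_right [simp]: "shuffle_word p [] = word p"
  by (simp add: shuffle_word_def)

lemma sw_cons: "shuffle_word (x # xs) (y # ys) = pre x (shuffle_word xs (y # ys)) + pre y (shuffle_word (x # xs) ys)"
  by (simp add: shuffle_word_def sum_list_map_word_cons comp_def)

lemma lookup_sw_nil: "lk (shuffle_word p q :: ('i, 'k::field) tens) [] = (if p = [] \<and> q = [] then 1 else 0)"
  by (induction p q rule: shuffle_list.induct) (simp_all add: lookup_word sw_cons lookup_add)

lemma lookup_sw_cons: "lk (shuffle_word p q :: ('i, 'k::field) tens) (l # v) =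
   (if p \<noteq> [] \<and> hd p = l then lk (shuffle_word (tl p) q :: ('i, 'k) tens) v else 0) +
   (if q \<noteq> [] \<and> hd q = l then lk (shuffle_word p (tl q) :: ('i, 'k) tens) v else 0)"
proof (cases p)
  case Nil then show ?thesis by (cases q) (auto simp: lookup_word)
next
  case (Cons x xs) then show ?thesis
    by (cases q) (auto simp: lookup_word sw_cons lookup_add lookup_pre_cons)
qed

lemma TV_pre: "c \<in> I \<Longrightarrow> X \<in> TV I \<Longrightarrow> pre c X \<in> TV I"
  unfolding pre_def by (rule TV_ext, rule TV_word) (auto dest: TV_keys)

lemma TV_sw: "p \<in> lists I \<Longrightarrow> q \<in> lists I \<Longrightarrow> shuffle_word p q \<in> TV I"
  by (induction p q rule: shuffle_list.induct) (auto simp: sw_cons intro!: TV_add TV_pre TV_word)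

lemma TV_shuffle: "x \<in> TV I \<Longrightarrow> y \<in> TV I \<Longrightarrow> shuffle x y \<in> TV I"
  unfolding shuffle_ext by (intro TV_ext TV_sw) (auto dest: TV_keys)

lemma shuffle_word_word: "shuffle (word p) (word q) = shuffle_word p q"
  by (simp add: shuffle_ext ext_word)

lemma shuffle_unit_right: "shuffle X (word []) = X"
  by (simp add: shuffle_ext ext_word ext_id)

lemma shuffle_ext_left: "shuffle (ext g x) Y = ext (\<lambda>a. shuffle (g a) Y) x"
  by (simp add: shuffle_ext ext_ext)

lemma shuffle_ext_right: "shuffle X (ext g y) = ext (\<lambda>b. shuffle X (g b)) y"
  by (simp add: shuffle_ext ext_ext ext_swap[of _ y X])

lemma shuffle_add_left: "shuffle (X + Y) Z = shuffle X Z + shuffle Y Z"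
  by (simp add: shuffle_ext ext_add)

lemma shuffle_smult_left: "shuffle (smult c X) Z = smult c (shuffle X Z)"
  by (simp add: shuffle_ext ext_smult)

lemma shuffle_sum_left: "shuffle (\<Sum>i\<in>A. X i) Z = (\<Sum>i\<in>A. shuffle (X i) Z)"
  by (simp add: shuffle_ext ext_sum)

lemma shuffle_add_right: "shuffle Z (X + Y) = shuffle Z X + shuffle Z Y"
  by (simp add: shuffle_ext ext_add ext_fun_add)

lemma shuffle_smult_right: "shuffle Z (smult c X) = smult c (shuffle Z X)"
  by (simp add: shuffle_ext ext_smult ext_fun_smult)

lemma shuffle_sum_right: "shuffle Z (\<Sum>i\<in>A. X i) = (\<Sum>i\<in>A. shuffle Z (X i))"
  by (simp add: shuffle_ext ext_sum ext_fun_sum)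

definition der :: "'i \<Rightarrow> ('i, 'k::field) tens \<Rightarrow> ('i, 'k) tens" where
  "der l X = ext (\<lambda>p. if p \<noteq> [] \<and> hd p = l then word (tl p) else 0) X"

lemma lookup_der: "lk (der l X) v = lk X (l # v)"
proof -
  have "lk (der l X) v = sc (\<lambda>p. if p = l # v then 1 else 0) X"
    unfolding der_def lookup_ext by (rule sc_cong) (auto simp: lookup_word neq_Nil_conv)
  then show ?thesis by (simp add: sc_indicator)
qed

lemma sc_der: "sc g (der l X) = sc (\<lambda>p. if p \<noteq> [] \<and> hd p = l then g (tl p) else 0) X"
  unfolding der_def sc_ext by (rule sc_cong) (auto simp: sc_word)

lemma lookup_shuffle_nil: "lk (shuffle X Y) [] = lk X [] * lk Y []"
proof -
  have "lk (shuffle X Y) [] = sc (\<lambda>p. sc (\<lambda>q. if q = [] then (if p = [] then 1 else 0) else 0) Y) X"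
    unfolding shuffle_ext lookup_ext by (intro sc_cong) (auto simp: lookup_sw_nil)
  also have "\<dots> = sc (\<lambda>p. if p = [] then lk Y [] else 0) X"
    by (rule sc_cong) (simp add: sc_indicator)
  finally show ?thesis by (simp add: sc_indicator)
qed

lemma lookup_shuffle_cons: "lk (shuffle X Y) (l # v) = lk (shuffle (der l X) Y) v + lk (shuffle X (der l Y)) v"
proof -
  have "lk (shuffle X Y) (l # v) =
     sc (\<lambda>p. sc (\<lambda>q. (if p \<noteq> [] \<and> hd p = l then lk (shuffle_word (tl p) q) v else 0)) Y) X +
     sc (\<lambda>p. sc (\<lambda>q. (if q \<noteq> [] \<and> hd q = l then lk (shuffle_word p (tl q)) v else 0)) Y) X"
    unfolding shuffle_ext lookup_ext lookup_sw_cons by (simp add: sc_fun_add)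
  also have "sc (\<lambda>p. sc (\<lambda>q. (if p \<noteq> [] \<and> hd p = l then lk (shuffle_word (tl p) q) v else 0)) Y) X
      = lk (shuffle (der l X) Y) v"
    unfolding shuffle_ext lookup_ext sc_der by (rule sc_cong) auto
  also have "sc (\<lambda>p. sc (\<lambda>q. (if q \<noteq> [] \<and> hd q = l then lk (shuffle_word p (tl q)) v else 0)) Y) X
      = lk (shuffle X (der l Y)) v"
    unfolding shuffle_ext lookup_ext sc_der ..
  finally show ?thesis .
qed


lemma take_lists: "w \<in> lists I \<Longrightarrow> take i w \<in> lists I"
  by (auto dest: in_set_takeD)

lemma drop_lists: "w \<in> lists I \<Longrightarrow> drop i w \<in> lists I"
  by (auto dest: in_set_dropD)

lemma pascal_sum:
  fixes a :: "nat \<Rightarrow> 'a::comm_ring_1"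
  shows "(\<Sum>j\<le>k. of_nat (k choose j) * (a j + a (Suc j))) = (\<Sum>j\<le>Suc k. of_nat (Suc k choose j) * a j)"
proof -
  have A: "(\<Sum>j\<le>k. of_nat (k choose j) * a j) = a 0 + (\<Sum>j\<le>k. of_nat (k choose Suc j) * a (Suc j))"
  proof -
    have "(\<Sum>j\<le>k. of_nat (k choose j) * a j) = (\<Sum>j\<le>Suc k. of_nat (k choose j) * a j)"
      by (simp add: binomial_eq_0)
    also have "\<dots> = a 0 + (\<Sum>j\<le>k. of_nat (k choose Suc j) * a (Suc j))"
      by (subst sum.atMost_Suc_shift) (simp add: binomial_eq_0)
    finally show ?thesis .
  qed
  have "(\<Sum>j\<le>Suc k. of_nat (Suc k choose j) * a j) = a 0 + (\<Sum>j\<le>k. of_nat (Suc k choose Suc j) * a (Suc j))"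
    by (subst sum.atMost_Suc_shift) simp
  also have "\<dots> = a 0 + (\<Sum>j\<le>k. of_nat (k choose j) * a (Suc j)) + (\<Sum>j\<le>k. of_nat (k choose Suc j) * a (Suc j))"
    by (simp add: distrib_right sum.distrib)
  also have "\<dots> = (\<Sum>j\<le>k. of_nat (k choose j) * a j) + (\<Sum>j\<le>k. of_nat (k choose j) * a (Suc j))"
    by (simp add: A)
  also have "\<dots> = (\<Sum>j\<le>k. of_nat (k choose j) * (a j + a (Suc j)))"
    by (simp add: distrib_left sum.distrib)
  finally show ?thesis by simp
qed

lemma pascal_sum_tens:
  fixes Q :: "nat \<Rightarrow> ('i, 'k::field) tens"
  shows "(\<Sum>j\<le>k. smult (of_nat (k choose j)) (Q j + Q (Suc j))) = (\<Sum>j\<le>Suc k. smult (of_nat (Suc k choose j)) (Q j))"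
  by (rule poly_mapping_eqI) (simp only: lookup_sum lookup_smult lookup_add, rule pascal_sum)

locale hs =
  fixes I :: "'i set"
    and m :: "('i, 'k::field_char_0) tens \<Rightarrow> ('i, 'k) tens \<Rightarrow> ('i, 'k) tens"
    and u :: "('i, 'k) tens"
    and S :: "('i, 'k) tens \<Rightarrow> ('i, 'k) tens"
  assumes bilin: "bilin_on I m"
    and assoc: "\<forall>x\<in>TV I. \<forall>y\<in>TV I. \<forall>z\<in>TV I. m (m x y) z = m x (m y z)"
    and comm: "\<forall>x\<in>TV I. \<forall>y\<in>TV I. m x y = m y x"
    and unit_in: "u \<in> TV I"
    and unit: "\<forall>x\<in>TV I. m u x = x \<and> m x u = x"
    and Delta_mult: "\<forall>x\<in>TV I. \<forall>y\<in>TV I. Delta (m x y) = mult2 m (Delta x) (Delta y)"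
    and Delta_unit: "Delta u = tensor u u"
    and eps_mult: "\<forall>x\<in>TV I. \<forall>y\<in>TV I. eps (m x y) = eps x * eps y"
    and eps_unit: "eps u = 1"
    and S_lin: "lin_on I S"
    and antipode: "\<forall>x\<in>TV I. mult_ext m (tmap S id (Delta x)) = smult (eps x) u
                          \<and> mult_ext m (tmap id S (Delta x)) = smult (eps x) u"
begin

lemma m_TV: "x \<in> TV I \<Longrightarrow> y \<in> TV I \<Longrightarrow> m x y \<in> TV I"
  by (rule bilin_TV[OF bilin])

lemma mw_TV: "p \<in> lists I \<Longrightarrow> q \<in> lists I \<Longrightarrow> m (word p) (word q) \<in> TV I"
  by (intro m_TV TV_word)

lemma lin1: "y \<in> TV I \<Longrightarrow> lin_on I (\<lambda>x. m x y)"
  by (rule bilin_lin1[OF bilin])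

lemma lin2: "x \<in> TV I \<Longrightarrow> lin_on I (m x)"
  by (rule bilin_lin2[OF bilin])

lemma m_zero_left [simp]: "y \<in> TV I \<Longrightarrow> m 0 y = 0"
  using lin_zero[OF lin1] by blast

lemma m_zero_right [simp]: "x \<in> TV I \<Longrightarrow> m x 0 = 0"
  using lin_zero[OF lin2] by blast

lemma m_assoc: "x \<in> TV I \<Longrightarrow> y \<in> TV I \<Longrightarrow> z \<in> TV I \<Longrightarrow> m (m x y) z = m x (m y z)"
  using assoc by blast

lemma m_comm: "x \<in> TV I \<Longrightarrow> y \<in> TV I \<Longrightarrow> m x y = m y x"
  using comm by blast

lemma m_swap4:
  assumes "a \<in> TV I" "b \<in> TV I" "c \<in> TV I" "d \<in> TV I"
  shows "m (m a b) (m c d) = m (m a c) (m b d)"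
proof -
  have "m (m a b) (m c d) = m a (m b (m c d))" using assms by (simp add: m_assoc m_TV)
  also have "m b (m c d) = m (m b c) d" using assms by (simp add: m_assoc m_TV)
  also have "m b c = m c b" using assms by (simp add: m_comm)
  also have "m (m c b) d = m c (m b d)" using assms by (simp add: m_assoc m_TV)
  also have "m a (m c (m b d)) = m (m a c) (m b d)" using assms by (simp add: m_assoc m_TV)
  finally show ?thesis .
qed

lemma m_ext2:
  assumes g: "\<And>a. a \<in> keys x \<Longrightarrow> g a \<in> TV I" and h: "\<And>b. b \<in> keys y \<Longrightarrow> h b \<in> TV I"
  shows "m (ext g x) (ext h y) = ext (\<lambda>a. ext (\<lambda>b. m (g a) (h b)) y) x"
proof -
  have hy: "ext h y \<in> TV I" by (rule TV_ext[OF h])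
  have "m (ext g x) (ext h y) = ext (\<lambda>a. m (g a) (ext h y)) x"
    by (rule lin_ext[OF lin1[OF hy] g])
  also have "\<dots> = ext (\<lambda>a. ext (\<lambda>b. m (g a) (h b)) y) x"
    by (rule ext_cong) (rule lin_ext[OF lin2[OF g] h])
  finally show ?thesis .
qed

lemma m_repr: "x \<in> TV I \<Longrightarrow> y \<in> TV I \<Longrightarrow> m x y = ext (\<lambda>p. ext (\<lambda>q. m (word p) (word q)) y) x"
  by (rule bilin_repr[OF bilin])

lemma u_mult_lookup: "lk u (x @ y) = lk u x * lk u y"
  using arg_cong[OF Delta_unit, of "\<lambda>X. lk X (x, y)"] by (simp add: lookup_Delta lookup_tensor)

lemma u_nil: "lk u [] = 1"
  using eps_unit by (simp add: eps_def)

lemma u_word: "u = word []"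
proof -
  have keys_nil: "keys u \<subseteq> {[]}"
  proof (rule ccontr)
    assume "\<not> keys u \<subseteq> {[]}"
    then have ne: "length ` keys u \<noteq> {}" and pos: "\<exists>v\<in>keys u. length v > 0" by auto
    define N where "N = Max (length ` keys u)"
    obtain w where w: "w \<in> keys u" "length w = N"
      using Max_in[OF _ ne] N_def by auto
    have "N > 0" using pos N_def by (metis Max_ge finite_imageI finite_keys image_eqI less_le_trans)
    have "lk u (w @ w) = lk u w * lk u w" by (rule u_mult_lookup)
    also have "\<dots> \<noteq> 0" using w by (simp add: in_keys_iff)
    finally have "w @ w \<in> keys u" by (simp add: in_keys_iff)
    then have "length (w @ w) \<le> N" unfolding N_def by (simp del: length_append)
    then show False using w \<open>N > 0\<close> by simp
  qed
  show ?thesis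
  proof (rule poly_mapping_eqI)
    fix v show "lk u v = lk (word []) v"
      using keys_nil u_nil by (cases "v = []") (auto simp: lookup_word in_keys_iff)
  qed
qed

lemma unit_left: "x \<in> TV I \<Longrightarrow> m (word []) x = x"
  using unit u_word by auto

lemma unit_right: "x \<in> TV I \<Longrightarrow> m x (word []) = x"
  using unit u_word by auto

lemma eps_m: "x \<in> TV I \<Longrightarrow> y \<in> TV I \<Longrightarrow> lk (m x y) [] = lk x [] * lk y []"
  using eps_mult by (simp add: eps_def)

fun P :: "nat \<Rightarrow> 'i list \<Rightarrow> ('i, 'k) tens" where
  "P 0 w = (if w = [] then word [] else 0)"
| "P (Suc j) w = (\<Sum>i<length w. m (P j (take i w)) (word (drop i w)))"

fun Psi :: "nat \<Rightarrow> 'i list \<Rightarrow> ('i, 'k) tens" where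
  "Psi 0 w = (if w = [] then word [] else 0)"
| "Psi (Suc k) w = (\<Sum>i\<le>length w. m (Psi k (take i w)) (word (drop i w)))"

lemma P_TV: "w \<in> lists I \<Longrightarrow> P j w \<in> TV I"
proof (induction j arbitrary: w)
  case 0 then show ?case by (simp add: TV_word)
next
  case (Suc j) then show ?case
    by (simp, intro TV_sum m_TV TV_word) (auto simp: take_lists drop_lists)
qed

lemma Psi_TV: "w \<in> lists I \<Longrightarrow> Psi j w \<in> TV I"
proof (induction j arbitrary: w)
  case 0 then show ?case by (simp add: TV_word)
next
  case (Suc j) then show ?case
    by (simp, intro TV_sum m_TV TV_word) (auto simp: take_lists drop_lists)
qed

lemma P_big: "length w < j \<Longrightarrow> w \<in> lists I \<Longrightarrow> P j w = 0"
proof (induction j arbitrary: w)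
  case 0 then show ?case by simp
next
  case (Suc j)
  have "m (P j (take i w)) (word (drop i w)) = 0" if "i < length w" for i
  proof -
    have "P j (take i w) = 0" using Suc that by (intro Suc.IH) (auto simp: take_lists)
    then show ?thesis using Suc.prems by (simp add: TV_word drop_lists)
  qed
  then show ?case by simp
qed

lemma P_Suc_plus: "w \<in> lists I \<Longrightarrow>
  (\<Sum>i\<le>length w. m (P j (take i w)) (word (drop i w))) = P j w + P (Suc j) w"
proof -
  assume w: "w \<in> lists I"
  have "(\<Sum>i\<le>length w. m (P j (take i w)) (word (drop i w))) =
        (\<Sum>i<length w. m (P j (take i w)) (word (drop i w))) + m (P j w) (word [])"
    by (simp add: lessThan_Suc_atMost[symmetric])
  also have "m (P j w) (word []) = P j w" by (rule unit_right[OF P_TV[OF w]])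
  finally show ?thesis by (simp add: add.commute)
qed

lemma Psi_binom: "w \<in> lists I \<Longrightarrow> Psi k w = (\<Sum>j\<le>k. smult (of_nat (k choose j)) (P j w))"
proof (induction k arbitrary: w)
  case 0 then show ?case by simp
next
  case (Suc k)
  have tw: "take i w \<in> lists I" "drop i w \<in> lists I" for i using Suc.prems by (auto simp: take_lists drop_lists)
  have "Psi (Suc k) w = (\<Sum>i\<le>length w. m (\<Sum>j\<le>k. smult (of_nat (k choose j)) (P j (take i w))) (word (drop i w)))"
    using Suc.IH tw by simp
  also have "\<dots> = (\<Sum>i\<le>length w. \<Sum>j\<le>k. smult (of_nat (k choose j)) (m (P j (take i w)) (word (drop i w))))"
    by (rule sum.cong[OF refl], subst lin_sum[OF lin1])
       (auto simp: TV_word tw TV_smult P_TV lin_smult[OF lin1])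
  also have "\<dots> = (\<Sum>j\<le>k. \<Sum>i\<le>length w. smult (of_nat (k choose j)) (m (P j (take i w)) (word (drop i w))))"
    by (rule sum.swap)
  also have "\<dots> = (\<Sum>j\<le>k. smult (of_nat (k choose j)) (P j w + P (Suc j) w))"
    by (rule sum.cong[OF refl]) (simp add: smult_sum[symmetric] P_Suc_plus[OF Suc.prems])
  also have "\<dots> = (\<Sum>j\<le>Suc k. smult (of_nat (Suc k choose j)) (P j w))"
    by (rule pascal_sum_tens)
  finally show ?case .
qed

end


definition binp :: "nat \<Rightarrow> 'k::field_char_0 poly" where
  "binp j = Polynomial.smult (inverse (fact j)) (\<Prod>i<j. [:- of_nat i, 1:])"

lemma poly_binp: "poly (binp j :: 'k::field_char_0 poly) (of_nat k) = of_nat (k choose j)"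
  by (simp add: binp_def poly_prod binomial_gbinomial gbinomial_prod_rev atLeast0LessThan
      divide_inverse mult.commute)

lemma poly_binp_0: "0 < j \<Longrightarrow> poly (binp j :: 'k::field_char_0 poly) 0 = 0"
  using poly_binp[of j 0] by (cases j) simp_all

lemma coeff_binp_0_1: "coeff (binp 0 :: 'k::field_char_0 poly) 1 = 0"
  by (simp add: binp_def)

lemma coeff_binp_1_1: "coeff (binp 1 :: 'k::field_char_0 poly) 1 = 1"
  by (simp add: binp_def)

lemma coeff_binp_prod_1:
  assumes "0 < i" "0 < l"
  shows "coeff (binp i * binp l :: 'k::field_char_0 poly) 1 = 0"
proof -
  have "coeff (binp i * binp l :: 'k poly) 1 = coeff (binp i) 0 * coeff (binp l) 1 + coeff (binp i) 1 * coeff (binp l) 0"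
    by (simp add: coeff_mult atMost_Suc)
  also have "\<dots> = 0"
  proof -
    have "coeff (binp i :: 'k poly) 0 = 0" "coeff (binp l :: 'k poly) 0 = 0"
      using poly_binp_0[OF assms(1)] poly_binp_0[OF assms(2)] by (simp_all add: poly_0_coeff_0)
    then show ?thesis by simp
  qed
  finally show ?thesis .
qed

lemma poly_eq_on_nats:
  fixes p q :: "'k::field_char_0 poly"
  assumes "\<And>k. poly p (of_nat k) = poly q (of_nat k)"
  shows "p = q"
proof (rule ccontr)
  assume "p \<noteq> q"
  then have "p - q \<noteq> 0" by simp
  then have fin: "finite {x. poly (p - q) x = 0}" by (rule poly_roots_finite)
  have "range (of_nat :: nat \<Rightarrow> 'k) \<subseteq> {x. poly (p - q) x = 0}" using assms by auto
  then have "finite (range (of_nat :: nat \<Rightarrow> 'k))" using fin finite_subset by blast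
  then have "finite (UNIV :: nat set)" using finite_imageD[OF _ inj_of_nat] by blast
  then show False by simp
qed

lemma sum_bound_eq:
  fixes g :: "nat \<Rightarrow> 'a::comm_monoid_add"
  assumes "\<And>j. k < j \<Longrightarrow> g j = (0::'a::comm_monoid_add)" "\<And>j. N < j \<Longrightarrow> g j = 0"
  shows "sum g {..k} = sum g {..N}"
proof -
  have "sum g {..k} = sum g {..max k N}"
  proof (rule sum.mono_neutral_left)
    show "\<forall>i\<in>{..max k N} - {..k}. g i = 0"
    proof
      fix i assume "i \<in> {..max k N} - {..k}"
      then have "k < i" by auto
      then show "g i = 0" by (rule assms(1))
    qed
  qed auto
  also have "\<dots> = sum g {..N}"
  proof (rule sum.mono_neutral_right)
    show "\<forall>i\<in>{..max k N} - {..N}. g i = 0"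
    proof
      fix i assume "i \<in> {..max k N} - {..N}"
      then have "N < i" by auto
      then show "g i = 0" by (rule assms(2))
    qed
  qed auto
  finally show ?thesis .
qed

context hs
begin

lemma Psi0_ext: "ext (Psi 0) z = smult (lk z []) (word [])"
proof (rule poly_mapping_eqI)
  fix v
  have "(\<lambda>a. lk (Psi 0 a) v) = (\<lambda>a. if a = [] then lk (word []) v else 0)" by auto
  then show "lk (ext (Psi 0) z) v = lk (smult (lk z []) (word [])) v"
    by (simp only: lookup_ext sc_indicator lookup_smult)
qed

lemma m_sum_sum:
  assumes "\<And>i. i \<in> A \<Longrightarrow> X i \<in> TV I" "\<And>j. j \<in> B \<Longrightarrow> Y j \<in> TV I"
  shows "m (\<Sum>i\<in>A. X i) (\<Sum>j\<in>B. Y j) = (\<Sum>i\<in>A. \<Sum>j\<in>B. m (X i) (Y j))"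
proof -
  have "m (\<Sum>i\<in>A. X i) (\<Sum>j\<in>B. Y j) = (\<Sum>i\<in>A. m (X i) (\<Sum>j\<in>B. Y j))"
    by (rule lin_sum[OF lin1]) (auto intro: TV_sum assms)
  also have "\<dots> = (\<Sum>i\<in>A. \<Sum>j\<in>B. m (X i) (Y j))"
    by (rule sum.cong[OF refl], rule lin_sum[OF lin2]) (auto intro: assms)
  finally show ?thesis .
qed

lemma m_smult2: "x \<in> TV I \<Longrightarrow> y \<in> TV I \<Longrightarrow> m (smult a x) (smult b y) = smult (a * b) (m x y)"
  by (simp add: lin_smult[OF lin1] lin_smult[OF lin2] TV_smult smult_smult m_TV mult.commute)

lemma Psi_Suc_ext: "ext (Psi (Suc k)) z = ext (\<lambda>(p, q). m (ext (Psi k) (word p)) (word q)) (Delta z)"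
  unfolding Delta_ext ext_ext
  by (rule ext_cong) (simp add: Dw_def ext_sum ext_single ext_word)

lemma CV_tensor:
  assumes F: "lin_on I F" and A: "A \<in> TV I" and B: "B \<in> TV I"
  shows "ext (\<lambda>(p, q). m (F (word p)) (word q)) (tensor A B) = m (F A) B"
proof -
  have "m (F A) B = m (ext (\<lambda>p. F (word p)) A) (ext word B)"
    using lin_repr[OF F A] ext_id[of B] by simp
  also have "\<dots> = ext (\<lambda>p. ext (\<lambda>q. m (F (word p)) (word q)) B) A"
    by (rule m_ext2) (auto intro: lin_TV[OF F] TV_word dest: TV_keys[OF A] TV_keys[OF B])
  finally show ?thesis by (simp add: ext_tensor)
qed

lemma mult2_Dw: "mult2 m (Dw a) (Dw b) = (\<Sum>i\<le>length a. \<Sum>j\<le>length b.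
   tensor (m (word (take i a)) (word (take j b))) (m (word (drop i a)) (word (drop j b))))"
  unfolding mult2_ext Dw_def by (simp add: ext_sum ext_single)

lemma Psi_from_words:
  assumes W: "\<And>a b. a \<in> lists I \<Longrightarrow> b \<in> lists I \<Longrightarrow> ext (Psi k) (m (word a) (word b)) = m (Psi k a) (Psi k b)"
    and x: "x \<in> TV I" and y: "y \<in> TV I"
  shows "ext (Psi k) (m x y) = m (ext (Psi k) x) (ext (Psi k) y)"
proof -
  have "ext (Psi k) (m x y) = ext (\<lambda>p. ext (\<lambda>q. ext (Psi k) (m (word p) (word q))) y) x"
    by (simp add: m_repr[OF x y] ext_ext)
  also have "\<dots> = ext (\<lambda>p. ext (\<lambda>q. m (Psi k p) (Psi k q)) y) x"
    by (intro ext_cong) (simp add: W TV_keys[OF x] TV_keys[OF y])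
  also have "\<dots> = m (ext (Psi k) x) (ext (Psi k) y)"
    by (rule m_ext2[symmetric]) (auto intro: Psi_TV dest: TV_keys[OF x] TV_keys[OF y])
  finally show ?thesis .
qed

lemma Psi_lin: "lin_on I (ext (Psi k))"
  by (rule lin_ext_on) (rule Psi_TV)

lemma Psi_mult: "x \<in> TV I \<Longrightarrow> y \<in> TV I \<Longrightarrow> ext (Psi k) (m x y) = m (ext (Psi k) x) (ext (Psi k) y)"
proof (induction k arbitrary: x y)
  case 0
  show ?case
  proof (rule Psi_from_words[OF _ 0])
    fix a b :: "'i list" assume a: "a \<in> lists I" and b: "b \<in> lists I"
    show "ext (Psi 0) (m (word a) (word b)) = m (Psi 0 a) (Psi 0 b)"
      using a b by (simp add: Psi0_ext eps_m TV_word lookup_word unit_left)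
  qed
next
  case (Suc k)
  show ?case
  proof (rule Psi_from_words[OF _ Suc.prems])
    fix a b :: "'i list" assume a: "a \<in> lists I" and b: "b \<in> lists I"
    define CV where "CV = ext (\<lambda>(p, q). m (ext (Psi k) (word p)) (word q))"
    have ta: "take i a \<in> lists I" "drop i a \<in> lists I" for i using a by (auto simp: take_lists drop_lists)
    have tb: "take i b \<in> lists I" "drop i b \<in> lists I" for i using b by (auto simp: take_lists drop_lists)
    have "ext (Psi (Suc k)) (m (word a) (word b)) = CV (mult2 m (Dw a) (Dw b))"
      unfolding Psi_Suc_ext CV_def using Delta_mult a b by (simp add: TV_word Delta_word)
    also have "\<dots> = (\<Sum>i\<le>length a. \<Sum>j\<le>length b.
        m (ext (Psi k) (m (word (take i a)) (word (take j b)))) (m (word (drop i a)) (word (drop j b))))"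
      unfolding mult2_Dw CV_def ext_sum
      by (intro sum.cong refl CV_tensor Psi_lin mw_TV ta tb)
    also have "\<dots> = (\<Sum>i\<le>length a. \<Sum>j\<le>length b.
        m (m (Psi k (take i a)) (word (drop i a))) (m (Psi k (take j b)) (word (drop j b))))"
      by (intro sum.cong refl)
         (simp add: Suc.IH TV_word ta tb ext_word m_swap4 Psi_TV)
    also have "\<dots> = m (Psi (Suc k) a) (Psi (Suc k) b)"
      by (simp only: Psi.simps, subst m_sum_sum) (auto intro!: m_TV TV_word Psi_TV ta tb)
    finally show "ext (Psi (Suc k)) (m (word a) (word b)) = m (Psi (Suc k) a) (Psi (Suc k) b)" .
  qed
qed

definition c :: "nat \<Rightarrow> 'k" where "c j = coeff (binp j) 1"

lemma c0: "c 0 = 0" unfolding c_def by (rule coeff_binp_0_1)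
lemma c1: "c (Suc 0) = 1" unfolding c_def using coeff_binp_1_1 by simp

definition E :: "'i list \<Rightarrow> ('i, 'k) tens" where
  "E w = (\<Sum>j\<le>length w. smult (c j) (P j w))"

lemma E_TV: "w \<in> lists I \<Longrightarrow> E w \<in> TV I"
  unfolding E_def by (intro TV_sum TV_smult P_TV)

lemma E_bound: "w \<in> lists I \<Longrightarrow> length w \<le> N \<Longrightarrow> E w = (\<Sum>j\<le>N. smult (c j) (P j w))"
  unfolding E_def by (rule sum.mono_neutral_left) (auto simp: P_big)

lemma Psi_bound: "w \<in> lists I \<Longrightarrow> length w \<le> N \<Longrightarrow> Psi k w = (\<Sum>j\<le>N. smult (of_nat (k choose j)) (P j w))"
  unfolding Psi_binom by (rule sum_bound_eq) (auto simp: P_big binomial_eq_0)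

lemma E_nil: "E [] = 0"
  by (simp add: E_def c0)

lemma E_letter: assumes x: "x \<in> I" shows "E [x] = word [x]"
proof -
  have "E [x] = smult (c 0) (P 0 [x]) + smult (c 1) (P 1 [x])"
    by (simp add: E_def)
  also have "\<dots> = word [x]"
    using x by (simp add: c0 c1 unit_left TV_word)
  finally show ?thesis .
qed

lemma E_vanish:
  assumes a: "a \<in> lists I" and b: "b \<in> lists I" and an: "a \<noteq> []" and bn: "b \<noteq> []"
  shows "ext E (m (word a) (word b)) = 0"
proof (rule poly_mapping_eqI)
  fix v
  define z where "z = m (word a) (word b)"
  have z: "z \<in> TV I" unfolding z_def by (rule mw_TV[OF a b])
  define N where "N = Max (insert 0 (length ` keys z))"
  have N: "length w \<le> N" if "w \<in> keys z" for w
    unfolding N_def using that by (intro Max_ge) auto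
  have EL: "ext E z = (\<Sum>j\<le>N. smult (c j) (ext (P j) z))"
  proof -
    have "ext E z = ext (\<lambda>w. \<Sum>j\<le>N. smult (c j) (P j w)) z"
      by (rule ext_cong) (simp add: E_bound N TV_keys[OF z])
    then show ?thesis by (simp add: ext_fun_sum ext_fun_smult)
  qed
  have PsiL: "ext (Psi k) z = (\<Sum>j\<le>N. smult (of_nat (k choose j)) (ext (P j) z))" for k
  proof -
    have "ext (Psi k) z = ext (\<lambda>w. \<Sum>j\<le>N. smult (of_nat (k choose j)) (P j w)) z"
      by (rule ext_cong) (simp add: Psi_bound N TV_keys[OF z])
    then show ?thesis by (simp add: ext_fun_sum ext_fun_smult)
  qed
  have Pa: "P i a \<in> TV I" for i by (rule P_TV[OF a])
  have Pb: "P i b \<in> TV I" for i by (rule P_TV[OF b])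
  have mPsi: "m (Psi k a) (Psi k b) = (\<Sum>i\<le>length a. \<Sum>l\<le>length b.
      smult (of_nat (k choose i) * of_nat (k choose l)) (m (P i a) (P l b)))" for k
    unfolding Psi_bound[OF a order_refl] Psi_bound[OF b order_refl]
    by (subst m_sum_sum) (auto intro: TV_smult Pa Pb simp: m_smult2 Pa Pb)
  define \<alpha> where "\<alpha> j = lk (ext (P j) z) v" for j
  define \<beta> where "\<beta> i l = lk (m (P i a) (P l b)) v" for i l
  define p :: "'k poly" where "p = (\<Sum>j\<le>N. Polynomial.smult (\<alpha> j) (binp j))"
  define q :: "'k poly" where "q = (\<Sum>i\<le>length a. \<Sum>l\<le>length b. Polynomial.smult (\<beta> i l) (binp i * binp l))"
  have "poly p (of_nat k) = poly q (of_nat k)" for k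
  proof -
    have "ext (Psi k) z = m (Psi k a) (Psi k b)"
      unfolding z_def by (simp add: Psi_mult TV_word a b ext_word)
    then have "lk (ext (Psi k) z) v = lk (m (Psi k a) (Psi k b)) v" by simp
    then show ?thesis
      unfolding PsiL mPsi p_def q_def \<alpha>_def \<beta>_def
      by (simp add: lookup_sum poly_sum poly_binp mult.commute mult.left_commute)
  qed
  then have "p = q" by (rule poly_eq_on_nats)
  have cp: "coeff p 1 = lk (ext E z) v"
    unfolding p_def EL \<alpha>_def c_def by (simp add: coeff_sum lookup_sum mult.commute)
  have cq: "coeff q 1 = 0"
    unfolding q_def coeff_sum
  proof (intro sum.neutral ballI)
    fix i l assume i: "i \<in> {..length a}" and l: "l \<in> {..length b}"
    show "coeff (Polynomial.smult (\<beta> i l) (binp i * binp l)) 1 = 0"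
    proof (cases "i = 0 \<or> l = 0")
      case True
      then have "\<beta> i l = 0" unfolding \<beta>_def using an bn Pa Pb by auto
      then show ?thesis by simp
    next
      case False then show ?thesis using coeff_binp_prod_1[of i l, where 'k='k] by simp
    qed
  qed
  show "lk (ext E (m (word a) (word b))) v = lk 0 v"
    using cp cq \<open>p = q\<close> by (simp add: z_def)
qed

end


definition prep :: "('i, 'k::field) tens \<Rightarrow> ('i, 'k) tens \<Rightarrow> ('i, 'k) tens" where
  "prep X Y = ext (\<lambda>p. if length p = 1 then ext (\<lambda>q. word (p @ q)) Y else 0) X"

lemma lookup_prep_nil [simp]: "lk (prep X Y) [] = 0"
proof -
  have "(\<lambda>p. lk (if length p = 1 then ext (\<lambda>q. word (p @ q)) Y else 0) []) = (\<lambda>p. 0)"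
  proof
    fix p
    show "lk (if length p = 1 then ext (\<lambda>q. word (p @ q)) Y else 0) [] = 0"
    proof (cases "length p = 1")
      case True
      then have "p \<noteq> []" by auto
      then have "sc (\<lambda>q. lk (word (p @ q)) []) Y = sc (\<lambda>q. 0) Y"
        by (intro sc_cong) (simp add: lookup_word)
      then show ?thesis using True by (simp add: lookup_ext)
    qed simp
  qed
  then show ?thesis by (simp add: prep_def lookup_ext)
qed

lemma lookup_prep_cons: "lk (prep X Y) (l # v) = lk X [l] * lk Y v"
proof -
  have "(\<lambda>p. lk (if length p = 1 then ext (\<lambda>q. word (p @ q)) Y else 0) (l # v)) =
        (\<lambda>p. if p = [l] then lk Y v else 0)"
  proof
    fix p
    show "lk (if length p = 1 then ext (\<lambda>q. word (p @ q)) Y else 0) (l # v) = (if p = [l] then lk Y v else 0)"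
    proof (cases "length p = 1")
      case True
      then obtain a where p: "p = [a]" by (cases p) auto
      show ?thesis
      proof (cases "a = l")
        case True
        show ?thesis using p True by (simp add: lookup_ext lookup_word sc_indicator)
      next
        case False
        show ?thesis using p False by (simp add: lookup_ext lookup_word)
      qed
    next
      case False then show ?thesis by auto
    qed
  qed
  then show ?thesis by (simp add: prep_def lookup_ext sc_indicator)
qed

lemma TV_prep: assumes X: "X \<in> TV I" and Y: "Y \<in> TV I" shows "prep X Y \<in> TV I"
  unfolding prep_def
proof (rule TV_ext)
  fix p assume p: "p \<in> keys X"
  have "ext (\<lambda>q. word (p @ q)) Y \<in> TV I"
    by (rule TV_ext, rule TV_word) (use TV_keys[OF X p] TV_keys[OF Y] in auto)
  then show "(if length p = 1 then ext (\<lambda>q. word (p @ q)) Y else 0) \<in> TV I" by simp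
qed

lemma sum_take_nil: "(\<Sum>j\<le>length b. (if take j b = [] then f j else 0)) = f 0"
proof (cases "b = []")
  case True then show ?thesis by simp
next
  case False
  have "(\<Sum>j\<le>length b. (if take j b = [] then f j else 0)) = (\<Sum>j\<le>length b. (if j = 0 then f j else 0))"
    by (rule sum.cong) (use False in auto)
  then show ?thesis by simp
qed

lemma sc_tensor: "sc (\<lambda>(x, y). g x * h y) (tensor A B) = sc g A * sc h B"
  by (simp add: tensor_ext sc_ext sc_single sc_fun_cmult sc_fun_multc)

lemma sc_Delta: "sc G (Delta z) = sc (\<lambda>w. \<Sum>k\<le>length w. G (take k w, drop k w)) z"
  by (simp add: Delta_ext sc_ext Dw_def sc_sum sc_single)

lemma triangle_sum:
  fixes F :: "nat \<Rightarrow> nat \<Rightarrow> 'a::comm_monoid_add"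
  shows "(\<Sum>k\<le>n. \<Sum>i\<in>{1..k}. F i k) = (\<Sum>i\<in>{1..n}. \<Sum>k'\<le>n - i. F i (i + k'))"
proof (induction n)
  case 0 then show ?case by simp
next
  case (Suc n)
  have L: "(\<Sum>k\<le>Suc n. \<Sum>i\<in>{1..k}. F i k) =
      (\<Sum>k\<le>n. \<Sum>i\<in>{1..k}. F i k) + (\<Sum>i\<in>{1..n}. F i (Suc n)) + F (Suc n) (Suc n)"
    by (simp add: add.assoc)
  have "(\<Sum>i\<in>{1..Suc n}. \<Sum>k'\<le>Suc n - i. F i (i + k')) =
        (\<Sum>i\<in>{1..n}. \<Sum>k'\<le>Suc n - i. F i (i + k')) + F (Suc n) (Suc n)"
    by simp
  also have "(\<Sum>i\<in>{1..n}. \<Sum>k'\<le>Suc n - i. F i (i + k')) =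
        (\<Sum>i\<in>{1..n}. (\<Sum>k'\<le>n - i. F i (i + k')) + F i (Suc n))"
  proof (rule sum.cong[OF refl])
    fix i assume "i \<in> {1..n}"
    then have "Suc n - i = Suc (n - i)" "i + Suc (n - i) = Suc n" by auto
    then show "(\<Sum>k'\<le>Suc n - i. F i (i + k')) = (\<Sum>k'\<le>n - i. F i (i + k')) + F i (Suc n)"
      by simp
  qed
  also have "\<dots> = (\<Sum>i\<in>{1..n}. \<Sum>k'\<le>n - i. F i (i + k')) + (\<Sum>i\<in>{1..n}. F i (Suc n))"
    by (simp only: sum.distrib)
  finally have R: "(\<Sum>i\<in>{1..Suc n}. \<Sum>k'\<le>Suc n - i. F i (i + k')) =
      (\<Sum>i\<in>{1..n}. \<Sum>k'\<le>n - i. F i (i + k')) + (\<Sum>i\<in>{1..n}. F i (Suc n)) + F (Suc n) (Suc n)" .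
  show ?case by (simp only: L R Suc.IH)
qed

context hs
begin

definition fl :: "'i list \<Rightarrow> 'i \<Rightarrow> 'k" where "fl t l = lk (E t) [l]"

lemma fl_nil [simp]: "fl [] l = 0"
  by (simp add: fl_def E_nil)

lemma fl_letter: "a \<in> I \<Longrightarrow> fl [a] l = (if a = l then 1 else 0)"
  by (simp add: fl_def E_letter lookup_word)

function phi :: "'i list \<Rightarrow> ('i, 'k) tens" where
  "phi w = (if w = [] then word [] else (\<Sum>i\<in>{1..length w}. prep (E (take i w)) (phi (drop i w))))"
  by pat_completeness auto
termination by (relation "measure length") auto

declare phi.simps [simp del]

lemma phi_nil: "phi [] = word []"
  by (simp add: phi.simps)

lemma lookup_phi_nil: "lk (phi w) [] = (if w = [] then 1 else 0)"
  by (subst phi.simps) (simp add: lookup_word lookup_sum)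

lemma lookup_phi_cons1: "lk (phi w) (l # v) = (\<Sum>i\<in>{1..length w}. fl (take i w) l * lk (phi (drop i w)) v)"
  by (subst phi.simps) (simp add: lookup_word lookup_sum lookup_prep_cons fl_def)

lemma lookup_phi_cons: "lk (phi w) (l # v) = (\<Sum>i\<le>length w. fl (take i w) l * lk (phi (drop i w)) v)"
proof -
  have "(\<Sum>i\<le>length w. fl (take i w) l * lk (phi (drop i w)) v) =
        (\<Sum>i\<in>{1..length w}. fl (take i w) l * lk (phi (drop i w)) v)"
  proof (rule sum.mono_neutral_right)
    show "\<forall>i\<in>{..length w} - {1..length w}. fl (take i w) l * lk (phi (drop i w)) v = 0"
    proof
      fix i assume "i \<in> {..length w} - {1..length w}"
      then have "i = 0" by auto
      then show "fl (take i w) l * lk (phi (drop i w)) v = 0" by simp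
    qed
  qed auto
  then show ?thesis by (simp add: lookup_phi_cons1)
qed

lemma phi_TV: "w \<in> lists I \<Longrightarrow> phi w \<in> TV I"
proof (induction w rule: phi.induct)
  case (1 w)
  show ?case
  proof (cases "w = []")
    case True then show ?thesis by (simp add: phi_nil TV_word)
  next
    case False
    then show ?thesis using 1
      by (subst phi.simps) (auto intro!: TV_sum TV_prep E_TV take_lists drop_lists 1)
  qed
qed

lemma phi_lin: "lin_on I (ext phi)"
  by (rule lin_ext_on) (rule phi_TV)

lemma lookup_word_nil: "lk (word t) [] = (if t = [] then 1 else 0)"
  by (auto simp: lookup_word)

lemma deriv:
  assumes a: "a \<in> lists I" and b: "b \<in> lists I"
  shows "lk (ext E (m (word a) (word b))) [l] = fl a l * lk (word b) [] + lk (word a) [] * fl b l"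
proof (cases "a = []")
  case True then show ?thesis using b by (simp add: unit_left TV_word ext_word fl_def lookup_word_nil E_nil)
next
  case an: False
  show ?thesis
  proof (cases "b = []")
    case True then show ?thesis using a by (simp add: unit_right TV_word ext_word fl_def lookup_word_nil E_nil)
  next
    case False then show ?thesis using an E_vanish[OF a b an False] by (simp add: lookup_word_nil)
  qed
qed

lemma der_phi: "der l (phi w) = (\<Sum>i\<le>length w. smult (fl (take i w) l) (phi (drop i w)))"
  by (rule poly_mapping_eqI) (simp add: lookup_der lookup_sum lookup_phi_cons)

lemma phi_mult_words:
  "a \<in> lists I \<Longrightarrow> b \<in> lists I \<Longrightarrow> lk (ext phi (m (word a) (word b))) v = lk (shuffle (phi a) (phi b)) v"
proof (induction v arbitrary: a b)
  case Nil
  have "lk (ext phi (m (word a) (word b))) [] = lk (m (word a) (word b)) []"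
    by (simp add: lookup_ext lookup_phi_nil sc_indicator)
  then show ?case using Nil by (simp add: eps_m TV_word lookup_word_nil lookup_shuffle_nil lookup_phi_nil)
next
  case (Cons l v)
  have a: "a \<in> lists I" and b: "b \<in> lists I" by fact+
  have ta: "take i a \<in> lists I" "drop i a \<in> lists I" for i using a by (auto simp: take_lists drop_lists)
  have tb: "take i b \<in> lists I" "drop i b \<in> lists I" for i using b by (auto simp: take_lists drop_lists)
  define S2 where "S2 x y = lk (shuffle (phi x) (phi y)) v" for x y
  define G where "G = (\<lambda>(x, y). fl x l * lk (phi y) v)"
  have "lk (ext phi (m (word a) (word b))) (l # v) = sc G (Delta (m (word a) (word b)))"
    unfolding sc_Delta lookup_ext G_def by (simp add: lookup_phi_cons)
  also have "\<dots> = sc G (mult2 m (Dw a) (Dw b))"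
    using Delta_mult a b by (simp add: TV_word Delta_word)
  also have "\<dots> = (\<Sum>i\<le>length a. \<Sum>j\<le>length b.
      lk (ext E (m (word (take i a)) (word (take j b)))) [l] * lk (ext phi (m (word (drop i a)) (word (drop j b)))) v)"
    unfolding mult2_Dw sc_sum G_def by (simp add: sc_tensor lookup_ext fl_def)
  also have "\<dots> = (\<Sum>i\<le>length a. \<Sum>j\<le>length b.
      (if take j b = [] then fl (take i a) l * S2 (drop i a) (drop j b) else 0) +
      (if take i a = [] then fl (take j b) l * S2 (drop i a) (drop j b) else 0))"
    by (intro sum.cong refl) (simp add: deriv ta tb Cons.IH S2_def lookup_word_nil distrib_right)
  also have "\<dots> = (\<Sum>i\<le>length a. fl (take i a) l * S2 (drop i a) b) + (\<Sum>j\<le>length b. fl (take j b) l * S2 a (drop j b))"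
  proof -
    have 1: "(\<Sum>i\<le>length a. \<Sum>j\<le>length b. (if take j b = [] then fl (take i a) l * S2 (drop i a) (drop j b) else 0))
        = (\<Sum>i\<le>length a. fl (take i a) l * S2 (drop i a) b)"
      by (rule sum.cong[OF refl]) (subst sum_take_nil, simp)
    have 2: "(\<Sum>i\<le>length a. \<Sum>j\<le>length b. (if take i a = [] then fl (take j b) l * S2 (drop i a) (drop j b) else 0))
        = (\<Sum>j\<le>length b. fl (take j b) l * S2 a (drop j b))"
      by (subst sum.swap, rule sum.cong[OF refl]) (subst sum_take_nil, simp)
    show ?thesis by (simp only: sum.distrib 1 2)
  qed
  also have "\<dots> = lk (shuffle (der l (phi a)) (phi b)) v + lk (shuffle (phi a) (der l (phi b))) v"
    by (simp add: der_phi shuffle_sum_left shuffle_sum_right shuffle_smult_left shuffle_smult_right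
        lookup_sum S2_def)
  also have "\<dots> = lk (shuffle (phi a) (phi b)) (l # v)"
    by (simp add: lookup_shuffle_cons)
  finally show ?case .
qed

lemma phi_mult: "x \<in> TV I \<Longrightarrow> y \<in> TV I \<Longrightarrow> ext phi (m x y) = shuffle (ext phi x) (ext phi y)"
proof -
  assume x: "x \<in> TV I" and y: "y \<in> TV I"
  have "ext phi (m x y) = ext (\<lambda>p. ext (\<lambda>q. ext phi (m (word p) (word q))) y) x"
    by (simp add: m_repr[OF x y] ext_ext)
  also have "\<dots> = ext (\<lambda>p. ext (\<lambda>q. shuffle (phi p) (phi q)) y) x"
    by (intro ext_cong poly_mapping_eqI phi_mult_words) (auto dest: TV_keys[OF x] TV_keys[OF y])
  also have "\<dots> = shuffle (ext phi x) (ext phi y)"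
    by (simp add: shuffle_ext_left shuffle_ext_right) (rule ext_swap)
  finally show ?thesis .
qed

end


lemma tele_aux:
  fixes u :: "nat \<Rightarrow> 'a::comm_ring_1"
  shows "(\<Sum>j\<le>N. (-1)^j * ((if 0 < j then u (j - 1) else 0) + u j)) = (-1)^N * u N"
  by (induction N) (simp_all add: algebra_simps)

lemma tele:
  fixes u :: "nat \<Rightarrow> 'a::comm_ring_1"
  shows "(\<Sum>j\<le>Suc N. (-1)^j * ((if 0 < j then u (j - 1) else 0) + (if j < Suc N then u j else 0))) = 0"
proof -
  have "(\<Sum>j\<le>Suc N. (-1)^j * ((if 0 < j then u (j - 1) else 0) + (if j < Suc N then u j else 0))) =
        (\<Sum>j\<le>N. (-1)^j * ((if 0 < j then u (j - 1) else 0) + u j)) + (-1)^(Suc N) * u N"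
    by simp
  also have "\<dots> = 0" by (simp add: tele_aux)
  finally show ?thesis .
qed

lemma pre_word: "pre c (word w) = word (c # w)"
  by (simp add: pre_def ext_word)

lemma sa_word: "shuffle_antipode (word t) = smult ((-1) ^ length t) (word (rev t))"
  by (simp add: shuffle_antipode_ext ext_word)

definition Ut :: "'i list \<Rightarrow> nat \<Rightarrow> ('i, 'k::field) tens" where
  "Ut z j = pre (z ! j) (shuffle_word (rev (take j z)) (drop (Suc j) z))"

lemma sw_telescope_term:
  fixes z :: "'i list"
  assumes j: "j \<le> length z" and z: "z \<noteq> []"
  shows "(shuffle_word (rev (take j z)) (drop j z) :: ('i, 'k::field) tens) =
     (if 0 < j then Ut z (j - 1) else 0) + (if j < length z then Ut z j else 0)"
proof (cases j)
  case 0
  obtain a z' where za: "z = a # z'" using z by (cases z) auto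
  show ?thesis using 0 za by (simp add: Ut_def pre_word)
next
  case (Suc j')
  have tk: "take j z = take j' z @ [z ! j']" using Suc j by (simp add: take_Suc_conv_app_nth)
  have rtk: "rev (take j z) = z ! j' # rev (take j' z)" by (simp add: tk)
  show ?thesis
  proof (cases "j < length z")
    case True
    have dr: "drop j z = z ! j # drop (Suc j) z" using True by (simp add: Cons_nth_drop_Suc)
    have "(shuffle_word (rev (take j z)) (drop j z) :: ('i, 'k) tens) =
          shuffle_word (z ! j' # rev (take j' z)) (z ! j # drop (Suc j) z)"
      by (simp only: rtk dr)
    also have "\<dots> = pre (z ! j') (shuffle_word (rev (take j' z)) (z ! j # drop (Suc j) z)) +
                     pre (z ! j) (shuffle_word (z ! j' # rev (take j' z)) (drop (Suc j) z))"
      by (rule sw_cons)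
    also have "\<dots> = pre (z ! j') (shuffle_word (rev (take j' z)) (drop (Suc j') z)) +
                     pre (z ! j) (shuffle_word (rev (take j z)) (drop (Suc j) z))"
    proof -
      have dr': "z ! j # drop (Suc j) z = drop (Suc j') z" using dr Suc by simp
      have rtk': "z ! j' # rev (take j' z) = rev (take j z)" using rtk by simp
      show ?thesis by (simp only: dr' rtk')
    qed
    also have "\<dots> = Ut z (j - 1) + Ut z j"
      by (simp add: Ut_def Suc)
    finally show ?thesis using True Suc by simp
  next
    case False
    then have jz: "j = length z" using j by simp
    have d: "drop (Suc j') z = []" "drop j z = []" using Suc jz by simp_all
    have "(shuffle_word (rev (take j z)) (drop j z) :: ('i, 'k) tens) = word (z ! j' # rev (take j' z))"
      by (simp only: d rtk sw_nil_right)
    also have "\<dots> = Ut z (j - 1)"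
      by (simp add: Ut_def Suc d pre_word)
    finally show ?thesis using False Suc by simp
  qed
qed

lemma shuffle_antipode_identity:
  "(\<Sum>j\<le>length z. shuffle (shuffle_antipode (word (take j z))) (word (drop j z))) =
   (if z = [] then word [] else (0 :: ('i, 'k::field) tens))"
proof (cases "z = []")
  case True then show ?thesis by (simp add: sa_word shuffle_smult_left shuffle_word_word)
next
  case False
  obtain N where N: "length z = Suc N" using False by (cases z) auto
  have "(\<Sum>j\<le>length z. shuffle (shuffle_antipode (word (take j z))) (word (drop j z)) :: ('i, 'k) tens) =
        (\<Sum>j\<le>length z. smult ((-1) ^ j) ((if 0 < j then Ut z (j - 1) else 0) + (if j < length z then Ut z j else 0)))"
  proof (rule sum.cong[OF refl])
    fix j assume "j \<in> {..length z}"
    then have j: "j \<le> length z" by simp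
    have "(shuffle (shuffle_antipode (word (take j z))) (word (drop j z)) :: ('i, 'k) tens) =
          smult ((-1) ^ j) (shuffle_word (rev (take j z)) (drop j z))"
      using j by (simp add: sa_word shuffle_smult_left shuffle_word_word min_def)
    also have "\<dots> = smult ((-1) ^ j) ((if 0 < j then Ut z (j - 1) else 0) + (if j < length z then Ut z j else 0))"
      by (subst sw_telescope_term[OF j False]) (rule refl)
    finally show "(shuffle (shuffle_antipode (word (take j z))) (word (drop j z)) :: ('i, 'k) tens) =
          smult ((-1) ^ j) ((if 0 < j then Ut z (j - 1) else 0) + (if j < length z then Ut z j else 0))" .
  qed
  also have "\<dots> = 0"
  proof (rule poly_mapping_eqI)
    fix v
    have "lk (\<Sum>j\<le>length z. smult ((-1) ^ j) ((if 0 < j then Ut z (j - 1) else 0) + (if j < length z then Ut z j else 0)) :: ('i, 'k) tens) v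
        = (\<Sum>j\<le>Suc N. (-1)^j * ((if 0 < j then lk (Ut z (j - 1) :: ('i, 'k) tens) v else 0) + (if j < Suc N then lk (Ut z j :: ('i, 'k) tens) v else 0)))"
      unfolding N lookup_sum by (intro sum.cong refl) (simp add: lookup_add)
    also have "\<dots> = 0" by (rule tele)
    finally show "lk (\<Sum>j\<le>length z. smult ((-1) ^ j) ((if 0 < j then Ut z (j - 1) else 0) + (if j < length z then Ut z j else 0)) :: ('i, 'k) tens) v = lk 0 v"
      by simp
  qed
  finally show ?thesis using False by simp
qed

lemma mult_ext_sum: "mult_ext m (\<Sum>i\<in>A. X i) = (\<Sum>i\<in>A. mult_ext m (X i))"
  by (simp add: mult_ext_ext ext_sum)

context hs
begin

lemma phi_coalg: "lk (phi w) (x @ y) = (\<Sum>k\<le>length w. lk (phi (take k w)) x * lk (phi (drop k w)) y)"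
proof (induction x arbitrary: w)
  case Nil
  have "(\<Sum>k\<le>length w. lk (phi (take k w)) [] * lk (phi (drop k w)) y) =
        (\<Sum>k\<le>length w. if k = 0 then lk (phi (drop k w)) y else 0)"
    by (rule sum.cong) (auto simp: lookup_phi_nil)
  then show ?case by simp
next
  case (Cons l x)
  define F where "F i k = fl (take i w) l * lk (phi (take (k - i) (drop i w))) x * lk (phi (drop k w)) y" for i k
  have "lk (phi w) ((l # x) @ y) = (\<Sum>i\<in>{1..length w}. fl (take i w) l * lk (phi (drop i w)) (x @ y))"
    by (simp add: lookup_phi_cons1)
  also have "\<dots> = (\<Sum>i\<in>{1..length w}. \<Sum>k'\<le>length w - i. F i (i + k'))"
    by (intro sum.cong refl) (simp add: Cons.IH F_def sum_distrib_left mult.assoc drop_drop add.commute)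
  also have "\<dots> = (\<Sum>k\<le>length w. \<Sum>i\<in>{1..k}. F i k)"
    by (rule triangle_sum[symmetric])
  also have "\<dots> = (\<Sum>k\<le>length w. lk (phi (take k w)) (l # x) * lk (phi (drop k w)) y)"
  proof (rule sum.cong[OF refl])
    fix k assume "k \<in> {..length w}"
    then have k: "k \<le> length w" by simp
    have "lk (phi (take k w)) (l # x) = (\<Sum>i\<in>{1..k}. fl (take i w) l * lk (phi (take (k - i) (drop i w))) x)"
      unfolding lookup_phi_cons1 using k by (intro sum.cong) (auto simp: min_def drop_take)
    then show "(\<Sum>i\<in>{1..k}. F i k) = lk (phi (take k w)) (l # x) * lk (phi (drop k w)) y"
      by (simp add: F_def sum_distrib_right)
  qed
  finally show ?case .
qed

lemma Delta_phi_word: "Delta (phi w) = (\<Sum>k\<le>length w. tensor (phi (take k w)) (phi (drop k w)))"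
  by (rule tens2_eqI) (simp add: lookup_Delta lookup_sum lookup_tensor phi_coalg)

lemma phi_Delta: "Delta (ext phi x) = tmap (ext phi) (ext phi) (Delta x)"
proof -
  have "Delta (ext phi x) = ext (\<lambda>w. Delta (phi w)) x"
    by (simp add: Delta_ext ext_ext)
  also have "\<dots> = ext (\<lambda>w. tmap (ext phi) (ext phi) (Dw w)) x"
    by (rule ext_cong) (simp add: Delta_phi_word tmap_ext Dw_def ext_sum ext_single ext_word)
  also have "\<dots> = tmap (ext phi) (ext phi) (Delta x)"
    by (simp only: Delta_ext tmap_ext ext_ext)
  finally show ?thesis .
qed

lemma phi_eps: "eps (ext phi x) = eps x"
  by (simp add: eps_def lookup_ext lookup_phi_nil sc_indicator)

lemma tri: "w \<in> lists I \<Longrightarrow> length w \<le> length v \<Longrightarrow> lk (phi w) v = (if w = v then 1 else 0)"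
proof (induction v arbitrary: w)
  case Nil then show ?case by (simp add: lookup_phi_nil)
next
  case (Cons l v)
  show ?case
  proof (cases w)
    case Nil then show ?thesis by (simp add: phi_nil lookup_word)
  next
    case (Cons a w')
    have wI: "w \<in> lists I" by fact
    have aI: "a \<in> I" and w'I: "w' \<in> lists I" using wI Cons by auto
    have len: "length w \<le> Suc (length v)" using Cons.prems by simp
    have "lk (phi w) (l # v) = (\<Sum>i\<in>{1..length w}. fl (take i w) l * lk (phi (drop i w)) v)"
      by (rule lookup_phi_cons1)
    also have "\<dots> = (\<Sum>i\<in>{1..length w}. if i = 1 then (if a = l \<and> w' = v then 1 else 0) else 0)"
    proof (rule sum.cong[OF refl])
      fix i assume i: "i \<in> {1..length w}"
      show "fl (take i w) l * lk (phi (drop i w)) v = (if i = 1 then (if a = l \<and> w' = v then 1 else 0) else 0)"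
      proof (cases "i = 1")
        case True
        have "lk (phi w') v = (if w' = v then 1 else 0)"
          using len Cons by (intro Cons.IH w'I) simp
        then show ?thesis using True Cons by (simp add: fl_letter aI)
      next
        case False
        then have i2: "2 \<le> i" using i by simp
        have d: "drop i w \<in> lists I" using wI by (rule drop_lists)
        have "length (drop i w) < length v" using i2 len i by auto
        moreover have "length (drop i w) \<le> length v" using i2 len i by auto
        ultimately have "lk (phi (drop i w)) v = 0" using Cons.IH[OF d] by auto
        then show ?thesis using False by simp
      qed
    qed
    also have "\<dots> = (if w = l # v then 1 else 0)"
      using Cons by (cases v) (auto simp: sum.delta)
    finally show ?thesis .
  qed
qed

lemma phi_inj:
  assumes x: "x \<in> TV I" and y: "y \<in> TV I" and eq: "ext phi x = ext phi y"
  shows "x = y"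
proof (rule ccontr)
  assume "x \<noteq> y"
  define d where "d = x - y"
  have d: "d \<in> TV I" unfolding d_def by (rule TV_diff[OF x y])
  have d0: "ext phi d = 0" unfolding d_def by (simp add: ext_diff eq)
  have "d \<noteq> 0" using \<open>x \<noteq> y\<close> by (simp add: d_def)
  then have ne: "length ` keys d \<noteq> {}" by simp
  define N where "N = Max (length ` keys d)"
  obtain v where v: "v \<in> keys d" "length v = N" using Max_in[OF _ ne] N_def by auto
  have "lk (ext phi d) v = sc (\<lambda>w. lk (phi w) v) d" by (simp add: lookup_ext)
  also have "\<dots> = sc (\<lambda>w. if w = v then 1 else 0) d"
  proof (rule sc_cong)
    fix w assume w: "w \<in> keys d"
    have "length w \<le> N" unfolding N_def using w by (intro Max_ge) auto
    then show "lk (phi w) v = (if w = v then 1 else 0)" using v TV_keys[OF d w] by (intro tri) auto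
  qed
  also have "\<dots> = lk d v" by (simp add: sc_indicator)
  finally have "lk d v = 0" using d0 by simp
  then show False using v by (simp add: in_keys_iff)
qed

lemma phi_surj_aux: "y \<in> TV I \<Longrightarrow> (\<forall>v\<in>keys y. length v < N) \<Longrightarrow> \<exists>x\<in>TV I. ext phi x = y"
proof (induction N arbitrary: y)
  case 0
  then have "y = 0" by auto
  then show ?case by (intro bexI[of _ 0]) auto
next
  case (Suc N)
  have y: "y \<in> TV I" by fact
  define t where "t = ext (\<lambda>w. if length w = N then word w else 0) y"
  have lt: "lk t v = (if length v = N then lk y v else 0)" for v
  proof -
    have "sc (\<lambda>w. lk (if length w = N then word w else 0) v) y = sc (\<lambda>w. if w = v then (if length v = N then 1 else 0) else 0) y"
      by (rule sc_cong) (auto simp: lookup_word)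
    then show ?thesis by (simp add: t_def lookup_ext sc_indicator)
  qed
  have t: "t \<in> TV I" unfolding t_def by (intro TV_ext) (auto intro: TV_word dest: TV_keys[OF y])
  have kt: "length w = N" if "w \<in> keys t" for w using that by (auto simp: in_keys_iff lt split: if_splits)
  define r where "r = y - ext phi t"
  have r: "r \<in> TV I" unfolding r_def by (intro TV_diff y lin_TV[OF phi_lin t])
  have "\<forall>v\<in>keys r. length v < N"
  proof
    fix v assume v: "v \<in> keys r"
    show "length v < N"
    proof (rule ccontr)
      assume "\<not> length v < N"
      then have vN: "N \<le> length v" by simp
      have "lk (ext phi t) v = sc (\<lambda>w. if w = v then 1 else 0) t"
        unfolding lookup_ext
      proof (rule sc_cong)
        fix w assume w: "w \<in> keys t"
        show "lk (phi w) v = (if w = v then 1 else 0)"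
          using kt[OF w] vN TV_keys[OF t w] by (intro tri) auto
      qed
      then have "lk (ext phi t) v = lk t v" by (simp add: sc_indicator)
      moreover have "lk y v = 0" if "length v \<noteq> N"
      proof -
        have "v \<notin> keys y" using Suc.prems(2) vN that by auto
        then show ?thesis by (simp add: in_keys_iff)
      qed
      ultimately have "lk r v = 0" by (simp add: r_def lookup_minus lt)
      then show False using v by (simp add: in_keys_iff)
    qed
  qed
  then obtain x' where x': "x' \<in> TV I" "ext phi x' = r" using Suc.IH[OF r] by blast
  show ?case
  proof (rule bexI[of _ "x' + t"])
    show "ext phi (x' + t) = y" using x' by (simp add: ext_add r_def)
    show "x' + t \<in> TV I" by (rule TV_add[OF x'(1) t])
  qed
qed

lemma phi_bij: "bij_betw (ext phi) (TV I) (TV I)"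
proof -
  have "inj_on (ext phi) (TV I)" by (rule inj_onI) (rule phi_inj)
  moreover have "ext phi ` TV I = TV I"
  proof
    show "ext phi ` TV I \<subseteq> TV I" using lin_TV[OF phi_lin] by auto
    show "TV I \<subseteq> ext phi ` TV I"
    proof
      fix y :: "('i, 'k) tens" assume y: "y \<in> TV I"
      have "\<forall>v\<in>keys y. length v < Suc (Max (length ` keys y))"
        by (auto intro: le_imp_less_Suc Max_ge)
      then show "y \<in> ext phi ` TV I" using phi_surj_aux[OF y] by blast
    qed
  qed
  ultimately show ?thesis by (simp add: bij_betw_def)
qed

lemma S_word_TV: "p \<in> lists I \<Longrightarrow> S (word p) \<in> TV I"
  by (rule lin_TV[OF S_lin TV_word])

lemma A_id: "w \<in> lists I \<Longrightarrow>
  (\<Sum>k\<le>length w. shuffle (ext phi (S (word (take k w)))) (phi (drop k w))) = smult (lk (word w) []) (word [])"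
proof -
  assume w: "w \<in> lists I"
  have tw: "take k w \<in> lists I" "drop k w \<in> lists I" for k using w by (auto simp: take_lists drop_lists)
  have "mult_ext m (tmap S id (Delta (word w))) = smult (eps (word w)) u"
    using antipode TV_word[OF w] by blast
  moreover have "mult_ext m (tmap S id (Delta (word w))) = (\<Sum>k\<le>length w. m (S (word (take k w))) (word (drop k w)))"
    unfolding Delta_word Dw_def tmap_ext
    by (simp add: ext_sum ext_single mult_ext_sum mult_ext_tensor[OF bilin] S_word_TV TV_word tw)
  ultimately have eq: "(\<Sum>k\<le>length w. m (S (word (take k w))) (word (drop k w))) = smult (lk (word w) []) (word [])"
    by (simp add: eps_def u_word)
  have "(\<Sum>k\<le>length w. shuffle (ext phi (S (word (take k w)))) (phi (drop k w))) =
        ext phi (\<Sum>k\<le>length w. m (S (word (take k w))) (word (drop k w)))"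
    by (simp add: ext_sum phi_mult S_word_TV TV_word tw ext_word)
  also have "\<dots> = smult (lk (word w) []) (word [])"
    by (simp add: eq ext_smult ext_word phi_nil)
  finally show ?thesis .
qed

lemma K_tensor: "ext (\<lambda>(p, q). shuffle (shuffle_antipode (word p)) (word q)) (tensor A B) = shuffle (shuffle_antipode A) B"
proof -
  have "shuffle (shuffle_antipode A) B =
     shuffle (ext (\<lambda>p. shuffle_antipode (word p)) A) (ext word B)"
    by (simp add: shuffle_antipode_ext ext_word ext_id)
  also have "\<dots> = ext (\<lambda>p. ext (\<lambda>q. shuffle (shuffle_antipode (word p)) (word q)) B) A"
    by (simp add: shuffle_ext_left shuffle_ext_right) (rule ext_swap[symmetric])
  finally show ?thesis by (simp add: ext_tensor)
qed

lemma B_id: "(\<Sum>k\<le>length w. shuffle (shuffle_antipode (phi (take k w))) (phi (drop k w))) = smult (lk (word w) []) (word [])"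
proof -
  define K :: "('i, 'k) tens2 \<Rightarrow> ('i, 'k) tens" where "K = ext (\<lambda>(p, q). shuffle (shuffle_antipode (word p)) (word q))"
  have "(\<Sum>k\<le>length w. shuffle (shuffle_antipode (phi (take k w))) (phi (drop k w))) = K (Delta (phi w))"
    by (simp add: Delta_phi_word K_def ext_sum K_tensor)
  also have "\<dots> = ext (\<lambda>z. K (Dw z)) (phi w)"
    by (simp add: K_def Delta_ext ext_ext)
  also have "\<dots> = ext (\<lambda>z. if z = [] then word [] else 0) (phi w)"
    by (rule ext_cong) (simp add: K_def Dw_def ext_sum ext_single shuffle_antipode_identity)
  also have "\<dots> = smult (lk (word w) []) (word [])"
  proof (rule poly_mapping_eqI)
    fix v
    have "lk (ext (\<lambda>z. if z = [] then word [] else 0) (phi w)) v = sc (\<lambda>z. if z = [] then lk (word []) v else 0) (phi w)"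
      unfolding lookup_ext by (rule sc_cong) auto
    then show "lk (ext (\<lambda>z. if z = [] then word [] else 0) (phi w)) v = lk (smult (lk (word w) []) (word [])) v"
      by (simp add: sc_indicator lookup_phi_nil lookup_word_nil)
  qed
  finally show ?thesis .
qed

lemma antipode_unique:
  fixes Fa Fb :: "'i list \<Rightarrow> ('i, 'k) tens"
  assumes eq: "\<And>w. w \<in> lists I \<Longrightarrow> (\<Sum>k\<le>length w. shuffle (Fa (take k w)) (phi (drop k w))) =
                                  (\<Sum>k\<le>length w. shuffle (Fb (take k w)) (phi (drop k w)))"
  shows "w \<in> lists I \<Longrightarrow> Fa w = Fb w"
proof (induction w rule: length_induct)
  case (1 w)
  have sp: "(\<Sum>k\<le>length w. shuffle (F (take k w)) (phi (drop k w))) =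
      (\<Sum>k<length w. shuffle (F (take k w)) (phi (drop k w))) + F w" for F
    by (simp add: lessThan_Suc_atMost[symmetric] phi_nil shuffle_unit_right)
  have "(\<Sum>k<length w. shuffle (Fa (take k w)) (phi (drop k w))) =
        (\<Sum>k<length w. shuffle (Fb (take k w)) (phi (drop k w)))"
    by (intro sum.cong refl, subst "1.IH") (auto simp: take_lists "1.prems")
  then show ?case using eq[OF "1.prems"] sp[of Fa] sp[of Fb] by simp
qed

lemma phi_antipode: "x \<in> TV I \<Longrightarrow> ext phi (S x) = shuffle_antipode (ext phi x)"
proof -
  assume x: "x \<in> TV I"
  have AB: "ext phi (S (word w)) = shuffle_antipode (phi w)" if w: "w \<in> lists I" for w
    by (rule antipode_unique[where Fa = "\<lambda>w. ext phi (S (word w))" and Fb = "\<lambda>w. shuffle_antipode (phi w)"])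
       (simp_all add: A_id B_id w)
  have "ext phi (S x) = ext phi (ext (\<lambda>w. S (word w)) x)"
    by (simp add: lin_repr[OF S_lin x, symmetric])
  also have "\<dots> = ext (\<lambda>w. ext phi (S (word w))) x"
    by (simp add: ext_ext)
  also have "\<dots> = ext (\<lambda>w. shuffle_antipode (phi w)) x"
    by (rule ext_cong) (simp add: AB TV_keys[OF x])
  also have "\<dots> = shuffle_antipode (ext phi x)"
    by (simp add: shuffle_antipode_ext ext_ext)
  finally show ?thesis .
qed

lemma main:
  "\<exists>\<phi>. lin_on I \<phi> \<and> bij_betw \<phi> (TV I) (TV I)
           \<and> \<phi> u = word []
           \<and> (\<forall>x\<in>TV I. \<forall>y\<in>TV I. \<phi> (m x y) = shuffle (\<phi> x) (\<phi> y))
           \<and> (\<forall>x\<in>TV I. Delta (\<phi> x) = tmap \<phi> \<phi> (Delta x))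
           \<and> (\<forall>x\<in>TV I. eps (\<phi> x) = eps x)
           \<and> (\<forall>x\<in>TV I. \<phi> (S x) = shuffle_antipode (\<phi> x))"
  by (rule exI[of _ "ext phi"])
     (simp add: phi_lin phi_bij u_word ext_word phi_nil phi_mult phi_Delta phi_eps phi_antipode)

end

theorem mainTheorem17:
  fixes I :: "'i set"
    and m :: "('i, 'k::field_char_0) tens \<Rightarrow> ('i, 'k) tens \<Rightarrow> ('i, 'k) tens"
    and u :: "('i, 'k) tens"
    and S :: "('i, 'k) tens \<Rightarrow> ('i, 'k) tens"
  assumes countI: "countable I"
    \<comment> \<open>m is a bilinear, associative, commutative product on T(V) with unit u\<close>
    and bilin: "bilin_on I m"
    and assoc: "\<forall>x\<in>TV I. \<forall>y\<in>TV I. \<forall>z\<in>TV I. m (m x y) z = m x (m y z)"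
    and comm: "\<forall>x\<in>TV I. \<forall>y\<in>TV I. m x y = m y x"
    and unit_in: "u \<in> TV I"
    and unit: "\<forall>x\<in>TV I. m u x = x \<and> m x u = x"
    \<comment> \<open>(T(V), m, u, Delta, eps) is a bialgebra\<close>
    and Delta_mult: "\<forall>x\<in>TV I. \<forall>y\<in>TV I. Delta (m x y) = mult2 m (Delta x) (Delta y)"
    and Delta_unit: "Delta u = tensor u u"
    and eps_mult: "\<forall>x\<in>TV I. \<forall>y\<in>TV I. eps (m x y) = eps x * eps y"
    and eps_unit: "eps u = 1"
    \<comment> \<open>S is its antipode\<close>
    and S_lin: "lin_on I S"
    and antipode: "\<forall>x\<in>TV I. mult_ext m (tmap S id (Delta x)) = smult (eps x) u
                          \<and> mult_ext m (tmap id S (Delta x)) = smult (eps x) u"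
  shows "\<exists>\<phi>. lin_on I \<phi> \<and> bij_betw \<phi> (TV I) (TV I)
           \<and> \<phi> u = word []
           \<and> (\<forall>x\<in>TV I. \<forall>y\<in>TV I. \<phi> (m x y) = shuffle (\<phi> x) (\<phi> y))
           \<and> (\<forall>x\<in>TV I. Delta (\<phi> x) = tmap \<phi> \<phi> (Delta x))
           \<and> (\<forall>x\<in>TV I. eps (\<phi> x) = eps x)
           \<and> (\<forall>x\<in>TV I. \<phi> (S x) = shuffle_antipode (\<phi> x))"
  proof -
  interpret hs I m u S
    using bilin assoc comm unit_in unit Delta_mult Delta_unit eps_mult eps_unit S_lin antipode
    by (unfold_locales) blast+
  show ?thesis by (rule main)
qed

end
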